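(* Let $\mathcal{C}$ be a Conway category and $\mathbf{Q}$ a finite automaton. If the identity $\Gamma(\mathbf{Q})$ holds in $\mathcal{C}$, then so does the identity $\Gamma(M(\mathbf{Q}))$ associated with the monoid $M(\mathbf{Q})$.
   Context: Cartesian categories have chosen finite products (terminal object $T$, projections $\pi_i$, tupling $\langle\cdot\rangle$, $!_A:A\to T$, $f\times g$), strictly associative; composition is written $g\circ f$; $\Delta_{A^n}=\langle 1_A,\ldots,1_A\rangle:A\to A^n$. A dagger operation maps $f:A\times C\to A$ to $f^\dagger:C\to A$. A Conway category is a cartesian category with dagger satisfying: $(f\circ(1_A\times g))^\dagger=f^\dagger\circ g$ ($f:A\times B\to A$, $g:C\to B$); $f^{\dagger\dagger}=(f\circ(\Delta_{A^2}\times 1_C))^\dagger$ ($f:A\times A\times C\to A$); $(f\circ\langle g,\pi_2^{A\times C}\rangle)^\dagger=f\circ\langle (g\circ\langle f,\pi_2^{B\times C}\rangle)^\dagger,1_C\rangle$ ($f:B\times C\to A$, $g:A\times C\to B$). A finite automaton $\mathbf{Q}=(Q,Z,\cdot)$ has finite nonempty state set $Q$, finite nonempty input alphabet $Z$ and action $Q\times Z\to Q$, extended to words; $M(\mathbf{Q})$ is the monoid of functions $Q\to Q$, $q\mapsto qu$, induced by words $u\in Z^*$, with product $u^{\mathbf{Q}}\cdot v^{\mathbf{Q}}=(uv)^{\mathbf{Q}}$. Write $Q=\{q_1,\ldots,q_n\}$, identified with $\{1,\ldots,n\}$, and $Z=\{a_1,\ldots,a_m\}$. For an object $A$ and $i\in[n]$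 let $\rho_i^{\mathbf{Q},A}=\langle\pi^{A^n}_{ia_1},\ldots,\pi^{A^n}_{ia_m}\rangle:A^n\to A^m$ ($ia_j$ is the index of $q_i\cdot a_j$). For $f:A^m\times C\to A$ let $f^{\mathbf{Q},A}:A^n\times C\to A^n$ have components $\pi_i^{A^n}\circ f^{\mathbf{Q},A}=f\circ(\rho_i^{\mathbf{Q},A}\times 1_C)$. The identity $\Gamma(\mathbf{Q})$ holds in $\mathcal{C}$ if $(f^{\mathbf{Q},A})^\dagger=\Delta_{A^n}\circ(f\circ(\Delta_{A^m}\times 1_C))^\dagger$ for all objects $A,C$ and all $f:A^m\times C\to A$. For a finite monoid $M$, $\Gamma(M)$ denotes $\Gamma$ of the automaton $(M,M,\cdot)$ whose action is monoid multiplication. *)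

theory Defs
  imports Main
begin

text \<open>Objects are all elements of type 'o, morphisms all elements of type 'm.
  cmp S g f is the composite g o f (defined when ccod f = cdom g).
  p1 S A B, p2 S A B are the chosen projections of A x B, cpair the tupling,
  bang S A the unique map A to the terminal object trm S.
  dag S A C f is the dagger f^dagger : C -> A of f : A x C -> A.\<close>

record ('o, 'm) cart_dag =
  cdom  :: "'m \<Rightarrow> 'o"
  ccod  :: "'m \<Rightarrow> 'o"
  cmp   :: "'m \<Rightarrow> 'm \<Rightarrow> 'm"
  cid   :: "'o \<Rightarrow> 'm"
  trm   :: "'o"
  cprod :: "'o \<Rightarrow> 'o \<Rightarrow> 'o"
  p1    :: "'o \<Rightarrow> 'o \<Rightarrow> 'm"
  p2    :: "'o \<Rightarrow> 'o \<Rightarrow> 'm"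
  cpair :: "'m \<Rightarrow> 'm \<Rightarrow> 'm"
  bang  :: "'o \<Rightarrow> 'm"
  dag   :: "'o \<Rightarrow> 'o \<Rightarrow> 'm \<Rightarrow> 'm"

definition hom :: "('o, 'm) cart_dag \<Rightarrow> 'm \<Rightarrow> 'o \<Rightarrow> 'o \<Rightarrow> bool" where
  "hom S f A B \<longleftrightarrow> cdom S f = A \<and> ccod S f = B"

definition cartesian_category :: "('o, 'm) cart_dag \<Rightarrow> bool" where
  "cartesian_category S \<longleftrightarrow>
    \<comment> \<open>category\<close>
    (\<forall>A. hom S (cid S A) A A) \<and>
    (\<forall>f g. ccod S f = cdom S g \<longrightarrow> hom S (cmp S g f) (cdom S f) (ccod S g)) \<and>
    (\<forall>f. cmp S f (cid S (cdom S f)) = f \<and> cmp S (cid S (ccod S f)) f = f) \<and>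
    (\<forall>f g h. ccod S f = cdom S g \<and> ccod S g = cdom S h \<longrightarrow>
       cmp S h (cmp S g f) = cmp S (cmp S h g) f) \<and>
    \<comment> \<open>terminal object\<close>
    (\<forall>A. hom S (bang S A) A (trm S)) \<and>
    (\<forall>A f. hom S f A (trm S) \<longrightarrow> f = bang S A) \<and>
    \<comment> \<open>binary products\<close>
    (\<forall>A B. hom S (p1 S A B) (cprod S A B) A \<and> hom S (p2 S A B) (cprod S A B) B) \<and>
    (\<forall>f g. cdom S f = cdom S g \<longrightarrow>
       hom S (cpair S f g) (cdom S f) (cprod S (ccod S f) (ccod S g)) \<and>
       cmp S (p1 S (ccod S f) (ccod S g)) (cpair S f g) = f \<and>
       cmp S (p2 S (ccod S f) (ccod S g)) (cpair S f g) = g) \<and>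
    (\<forall>h C A B. hom S h C (cprod S A B) \<longrightarrow>
       cpair S (cmp S (p1 S A B) h) (cmp S (p2 S A B) h) = h) \<and>
    \<comment> \<open>strict associativity: (A x B) x C = A x (B x C) and the canonical iso is the identity\<close>
    (\<forall>A B C. cprod S (cprod S A B) C = cprod S A (cprod S B C) \<and>
       cpair S (cmp S (p1 S A B) (p1 S (cprod S A B) C))
               (cpair S (cmp S (p2 S A B) (p1 S (cprod S A B) C)) (p2 S (cprod S A B) C))
         = cid S (cprod S A (cprod S B C)))"

definition ctimes :: "('o, 'm) cart_dag \<Rightarrow> 'm \<Rightarrow> 'm \<Rightarrow> 'm" where
  "ctimes S f g = cpair S (cmp S f (p1 S (cdom S f) (cdom S g)))
                          (cmp S g (p2 S (cdom S f) (cdom S g)))"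

definition conway_category :: "('o, 'm) cart_dag \<Rightarrow> bool" where
  "conway_category S \<longleftrightarrow> cartesian_category S \<and>
    (\<forall>A C f. hom S f (cprod S A C) A \<longrightarrow> hom S (dag S A C f) C A) \<and>
    \<comment> \<open>parameter identity\<close>
    (\<forall>A B C f g. hom S f (cprod S A B) A \<and> hom S g C B \<longrightarrow>
       dag S A C (cmp S f (ctimes S (cid S A) g)) = cmp S (dag S A B f) g) \<and>
    \<comment> \<open>double dagger identity\<close>
    (\<forall>A C f. hom S f (cprod S A (cprod S A C)) A \<longrightarrow>
       dag S A C (dag S A (cprod S A C) f) =
       dag S A C (cmp S f (ctimes S (cpair S (cid S A) (cid S A)) (cid S C)))) \<and>
    \<comment> \<open>composition identity\<close>
    (\<forall>A B C f g. hom S f (cprod S B C) A \<and> hom S g (cprod S A C) B \<longrightarrow>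
       dag S A C (cmp S f (cpair S g (p2 S A C))) =
       cmp S f (cpair S (dag S B C (cmp S g (cpair S f (p2 S B C)))) (cid S C)))"

fun cpow :: "('o, 'm) cart_dag \<Rightarrow> 'o \<Rightarrow> nat \<Rightarrow> 'o" where
  "cpow S A 0 = trm S"
| "cpow S A (Suc 0) = A"
| "cpow S A (Suc (Suc k)) = cprod S A (cpow S A (Suc k))"

text \<open>nproj S A n i is the projection A^n -> A onto the (i+1)-th factor (0-based i < n).\<close>
fun nproj :: "('o, 'm) cart_dag \<Rightarrow> 'o \<Rightarrow> nat \<Rightarrow> nat \<Rightarrow> 'm" where
  "nproj S A 0 i = undefined"
| "nproj S A (Suc 0) i = cid S A"
| "nproj S A (Suc (Suc k)) i =
     (if i = 0 then p1 S A (cpow S A (Suc k))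
      else cmp S (nproj S A (Suc k) (i - 1)) (p2 S A (cpow S A (Suc k))))"

fun ntuple :: "('o, 'm) cart_dag \<Rightarrow> 'm list \<Rightarrow> 'm" where
  "ntuple S [] = undefined"
| "ntuple S [f] = f"
| "ntuple S (f # g # fs) = cpair S f (ntuple S (g # fs))"

definition cdiag :: "('o, 'm) cart_dag \<Rightarrow> 'o \<Rightarrow> nat \<Rightarrow> 'm" where
  "cdiag S A n = ntuple S (replicate n (cid S A))"

text \<open>A finite automaton with states {0..<n} (q_{i+1} is i) and letters {0..<m}
  (a_{j+1} is j); delta i j is the index of q_i . a_j.\<close>
definition automaton :: "nat \<Rightarrow> nat \<Rightarrow> (nat \<Rightarrow> nat \<Rightarrow> nat) \<Rightarrow> bool" where
  "automaton n m \<delta> \<longleftrightarrow> 0 < n \<and> 0 < m \<and> (\<forall>i<n. \<forall>j<m. \<delta> i j < n)"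

definition rho :: "('o, 'm) cart_dag \<Rightarrow> nat \<Rightarrow> nat \<Rightarrow> (nat \<Rightarrow> nat \<Rightarrow> nat) \<Rightarrow> 'o \<Rightarrow> nat \<Rightarrow> 'm" where
  "rho S n m \<delta> A i = ntuple S (map (\<lambda>j. nproj S A n (\<delta> i j)) [0..<m])"

definition fQ :: "('o, 'm) cart_dag \<Rightarrow> nat \<Rightarrow> nat \<Rightarrow> (nat \<Rightarrow> nat \<Rightarrow> nat) \<Rightarrow> 'o \<Rightarrow> 'o \<Rightarrow> 'm \<Rightarrow> 'm" where
  "fQ S n m \<delta> A C f =
     ntuple S (map (\<lambda>i. cmp S f (ctimes S (rho S n m \<delta> A i) (cid S C))) [0..<n])"

definition Gamma :: "('o, 'm) cart_dag \<Rightarrow> nat \<Rightarrow> nat \<Rightarrow> (nat \<Rightarrow> nat \<Rightarrow> nat) \<Rightarrow> bool" where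
  "Gamma S n m \<delta> \<longleftrightarrow>
     (\<forall>A C f. hom S f (cprod S (cpow S A m) C) A \<longrightarrow>
        dag S (cpow S A n) C (fQ S n m \<delta> A C f) =
        cmp S (cdiag S A n) (dag S A C (cmp S f (ctimes S (cdiag S A m) (cid S C)))))"

definition word_trans :: "nat \<Rightarrow> (nat \<Rightarrow> nat \<Rightarrow> nat) \<Rightarrow> nat list \<Rightarrow> nat \<Rightarrow> nat" where
  "word_trans n \<delta> w = (\<lambda>q. if q < n then foldl \<delta> q w else q)"

definition trans_monoid :: "nat \<Rightarrow> nat \<Rightarrow> (nat \<Rightarrow> nat \<Rightarrow> nat) \<Rightarrow> (nat \<Rightarrow> nat) set" where
  "trans_monoid n m \<delta> = {word_trans n \<delta> w | w. set w \<subseteq> {0..<m}}"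

text \<open>Product u^Q . v^Q = (uv)^Q, i.e. first u then v: as functions v^Q o u^Q.\<close>
definition tm_mult :: "(nat \<Rightarrow> nat) \<Rightarrow> (nat \<Rightarrow> nat) \<Rightarrow> (nat \<Rightarrow> nat)" where
  "tm_mult s t = t \<circ> s"

end

theory Submission
  imports Defs
begin

locale conway =
  fixes S :: "('o,'m) cart_dag"
  assumes CC: "conway_category S"
begin

abbreviation dm where "dm f \<equiv> cdom S f"
abbreviation cd where "cd f \<equiv> ccod S f"
abbreviation cm (infixl "\<cdot>" 60) where "g \<cdot> f \<equiv> cmp S g f"
abbreviation idm where "idm A \<equiv> cid S A"
abbreviation pr (infixr "\<otimes>" 70) where "A \<otimes> B \<equiv> cprod S A B"
abbreviation q1 where "q1 A B \<equiv> p1 S A B"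
abbreviation q2 where "q2 A B \<equiv> p2 S A B"
abbreviation pa where "pa f g \<equiv> cpair S f g"
abbreviation tm where "tm f g \<equiv> ctimes S f g"
abbreviation dg where "dg A C f \<equiv> dag S A C f"

lemma CA: "cartesian_category S" using CC unfolding conway_category_def by blast

lemma id_ty[simp]: "dm (idm A) = A" "cd (idm A) = A"
  using CA unfolding cartesian_category_def hom_def by auto

lemma cm_ty[simp]: "cd f = dm g \<Longrightarrow> dm (g \<cdot> f) = dm f"  "cd f = dm g \<Longrightarrow> cd (g \<cdot> f) = cd g"
  using CA unfolding cartesian_category_def hom_def by auto

lemma id_r[simp]: "dm f = A \<Longrightarrow> f \<cdot> idm A = f"
  using CA unfolding cartesian_category_def hom_def by auto
lemma id_l[simp]: "cd f = A \<Longrightarrow> idm A \<cdot> f = f"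
  using CA unfolding cartesian_category_def hom_def by auto

lemma assoc[simp]: "cd f = dm g \<Longrightarrow> cd g = dm h \<Longrightarrow> h \<cdot> (g \<cdot> f) = h \<cdot> g \<cdot> f"
  using CA unfolding cartesian_category_def hom_def by auto

lemma q_ty[simp]: "dm (q1 A B) = A \<otimes> B" "cd (q1 A B) = A" "dm (q2 A B) = A \<otimes> B" "cd (q2 A B) = B"
  using CA unfolding cartesian_category_def hom_def by auto

lemma pa_ty[simp]: "dm f = dm g \<Longrightarrow> dm (pa f g) = dm f" "dm f = dm g \<Longrightarrow> cd (pa f g) = cd f \<otimes> cd g"
  using CA unfolding cartesian_category_def hom_def by auto

lemma q1_pa[simp]: "dm f = dm g \<Longrightarrow> cd f = A \<Longrightarrow> cd g = B \<Longrightarrow> q1 A B \<cdot> pa f g = f"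
  using CA unfolding cartesian_category_def hom_def by auto
lemma q2_pa[simp]: "dm f = dm g \<Longrightarrow> cd f = A \<Longrightarrow> cd g = B \<Longrightarrow> q2 A B \<cdot> pa f g = g"
  using CA unfolding cartesian_category_def hom_def by auto

lemma pa_eta: "cd h = A \<otimes> B \<Longrightarrow> pa (q1 A B \<cdot> h) (q2 A B \<cdot> h) = h"
  using CA unfolding cartesian_category_def hom_def by metis

lemma obj_assoc[simp]: "(A \<otimes> B) \<otimes> C = A \<otimes> (B \<otimes> C)"
  using CA unfolding cartesian_category_def hom_def by auto

lemma mor_assoc: "pa (q1 A B \<cdot> q1 (A \<otimes> B) C) (pa (q2 A B \<cdot> q1 (A \<otimes> B) C) (q2 (A \<otimes> B) C)) = idm (A \<otimes> (B \<otimes> C))"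
  using CA unfolding cartesian_category_def hom_def by auto

lemma pa_ext: "cd h = A \<otimes> B \<Longrightarrow> cd k = A \<otimes> B \<Longrightarrow> q1 A B \<cdot> h = q1 A B \<cdot> k \<Longrightarrow> q2 A B \<cdot> h = q2 A B \<cdot> k \<Longrightarrow> h = k"
  by (metis pa_eta)

lemma pa_cm[simp]: "dm f = dm g \<Longrightarrow> cd k = dm f \<Longrightarrow> pa f g \<cdot> k = pa (f \<cdot> k) (g \<cdot> k)"
proof -
  assume a: "dm f = dm g" "cd k = dm f"
  have t: "cd (pa f g \<cdot> k) = cd f \<otimes> cd g" using a by simp
  have "pa (q1 (cd f) (cd g) \<cdot> (pa f g \<cdot> k)) (q2 (cd f) (cd g) \<cdot> (pa f g \<cdot> k)) = pa f g \<cdot> k"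
    by (rule pa_eta[OF t])
  moreover have "q1 (cd f) (cd g) \<cdot> (pa f g \<cdot> k) = f \<cdot> k" using a by (subst assoc) auto
  moreover have "q2 (cd f) (cd g) \<cdot> (pa f g \<cdot> k) = g \<cdot> k" using a by (subst assoc) auto
  ultimately show ?thesis by simp
qed

lemma q1_pa'[simp]: "dm f = dm g \<Longrightarrow> cd f = A \<Longrightarrow> cd g = B \<Longrightarrow> dm h = A \<Longrightarrow> h \<cdot> q1 A B \<cdot> pa f g = h \<cdot> f"
  by (subst assoc[symmetric]) auto
lemma q2_pa'[simp]: "dm f = dm g \<Longrightarrow> cd f = A \<Longrightarrow> cd g = B \<Longrightarrow> dm h = B \<Longrightarrow> h \<cdot> q2 A B \<cdot> pa f g = h \<cdot> g"
  by (subst assoc[symmetric]) auto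
lemma pa_cm'[simp]: "dm f = dm g \<Longrightarrow> cd k = dm f \<Longrightarrow> dm h = cd f \<otimes> cd g \<Longrightarrow> h \<cdot> pa f g \<cdot> k = h \<cdot> pa (f \<cdot> k) (g \<cdot> k)"
  by (subst assoc[symmetric]) auto
lemma pa_q: "pa (q1 A B) (q2 A B) = idm (A \<otimes> B)"
  using pa_eta[of "idm (A \<otimes> B)" A B] by simp

lemma pa_assoc: "dm a = dm b \<Longrightarrow> dm b = dm c \<Longrightarrow> pa (pa a b) c = pa a (pa b c)"
proof -
  assume h: "dm a = dm b" "dm b = dm c"
  let ?A = "cd a" and ?B = "cd b" and ?C = "cd c"
  have "pa (pa a b) c = idm (?A \<otimes> (?B \<otimes> ?C)) \<cdot> pa (pa a b) c" using h by simp
  also have "\<dots> = pa (q1 ?A ?B \<cdot> q1 (?A \<otimes> ?B) ?C) (pa (q2 ?A ?B \<cdot> q1 (?A \<otimes> ?B) ?C) (q2 (?A \<otimes> ?B) ?C)) \<cdot> pa (pa a b) c"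
    by (simp add: mor_assoc)
  also have "\<dots> = pa a (pa b c)" using h by (simp del: obj_assoc)
  finally show ?thesis .
qed

declare pa_assoc[simp]

lemma q1_assoc[simp]: "dm a = dm b \<Longrightarrow> dm b = dm c \<Longrightarrow> cd a = A \<Longrightarrow> cd b = B \<Longrightarrow> cd c = C \<Longrightarrow>
   q1 (A \<otimes> B) C \<cdot> pa a (pa b c) = pa a b"
  by (metis pa_assoc q1_pa pa_ty(1) pa_ty(2))
lemma q2_assoc[simp]: "dm a = dm b \<Longrightarrow> dm b = dm c \<Longrightarrow> cd a = A \<Longrightarrow> cd b = B \<Longrightarrow> cd c = C \<Longrightarrow>
   q2 (A \<otimes> B) C \<cdot> pa a (pa b c) = c"
  by (metis pa_assoc q2_pa pa_ty(1) pa_ty(2))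
lemma q1_assoc'[simp]: "dm a = dm b \<Longrightarrow> dm b = dm c \<Longrightarrow> cd a = A \<Longrightarrow> cd b = B \<Longrightarrow> cd c = C \<Longrightarrow> dm h = A \<otimes> B \<Longrightarrow>
   h \<cdot> q1 (A \<otimes> B) C \<cdot> pa a (pa b c) = h \<cdot> pa a b"
  by (subst assoc[symmetric]) auto
lemma q2_assoc'[simp]: "dm a = dm b \<Longrightarrow> dm b = dm c \<Longrightarrow> cd a = A \<Longrightarrow> cd b = B \<Longrightarrow> cd c = C \<Longrightarrow> dm h = C \<Longrightarrow>
   h \<cdot> q2 (A \<otimes> B) C \<cdot> pa a (pa b c) = h \<cdot> c"
  by (subst assoc[symmetric]) auto

lemma tm_def': "tm f g = pa (f \<cdot> q1 (dm f) (dm g)) (g \<cdot> q2 (dm f) (dm g))"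
  by (simp add: ctimes_def)

lemma tm_ty[simp]: "dm (tm f g) = dm f \<otimes> dm g" "cd (tm f g) = cd f \<otimes> cd g"
  by (simp_all add: tm_def')

lemma tm_pa[simp]: "dm a = dm b \<Longrightarrow> cd a = dm f \<Longrightarrow> cd b = dm g \<Longrightarrow> tm f g \<cdot> pa a b = pa (f \<cdot> a) (g \<cdot> b)"
  by (simp add: tm_def')
lemma tm_pa'[simp]: "dm a = dm b \<Longrightarrow> cd a = dm f \<Longrightarrow> cd b = dm g \<Longrightarrow> dm h = cd f \<otimes> cd g \<Longrightarrow>
   h \<cdot> tm f g \<cdot> pa a b = h \<cdot> pa (f \<cdot> a) (g \<cdot> b)"
  by (subst assoc[symmetric]) auto

lemma tm_tm[simp]: "cd f' = dm f \<Longrightarrow> cd g' = dm g \<Longrightarrow> tm f g \<cdot> tm f' g' = tm (f \<cdot> f') (g \<cdot> g')"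
  by (simp add: tm_def'[of "f \<cdot> f'" "g \<cdot> g'"] tm_def'[of f' g'])
lemma tm_tm'[simp]: "cd f' = dm f \<Longrightarrow> cd g' = dm g \<Longrightarrow> dm h = cd f \<otimes> cd g \<Longrightarrow> h \<cdot> tm f g \<cdot> tm f' g' = h \<cdot> tm (f \<cdot> f') (g \<cdot> g')"
  by (subst assoc[symmetric]) auto

lemma tm_id: "tm (idm A) (idm B) = idm (A \<otimes> B)"
  by (simp add: tm_def' pa_q)

lemma dg_ty[simp]: "dm f = A \<otimes> C \<Longrightarrow> cd f = A \<Longrightarrow> dm (dg A C f) = C"
  "dm f = A \<otimes> C \<Longrightarrow> cd f = A \<Longrightarrow> cd (dg A C f) = A"
  using CC unfolding conway_category_def hom_def by auto

lemma ax_param: "dm f = A \<otimes> B \<Longrightarrow> cd f = A \<Longrightarrow> dm g = C \<Longrightarrow> cd g = B \<Longrightarrow>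
   dg A C (f \<cdot> tm (idm A) g) = dg A B f \<cdot> g"
  using CC unfolding conway_category_def hom_def by auto

lemma ax_dd: "dm f = A \<otimes> (A \<otimes> C) \<Longrightarrow> cd f = A \<Longrightarrow>
   dg A C (dg A (A \<otimes> C) f) = dg A C (f \<cdot> tm (pa (idm A) (idm A)) (idm C))"
  using CC unfolding conway_category_def hom_def by auto

lemma ax_comp: "dm f = B \<otimes> C \<Longrightarrow> cd f = A \<Longrightarrow> dm g = A \<otimes> C \<Longrightarrow> cd g = B \<Longrightarrow>
   dg A C (f \<cdot> pa g (q2 A C)) = f \<cdot> pa (dg B C (g \<cdot> pa f (q2 B C))) (idm C)"
  using CC unfolding conway_category_def hom_def by blast

lemma fixp: "dm f = A \<otimes> C \<Longrightarrow> cd f = A \<Longrightarrow> f \<cdot> pa (dg A C f) (idm C) = dg A C f"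
  using ax_comp[of f A C A "q1 A C"] by (simp add: pa_q)

lemma dg_const: "dm k = C \<Longrightarrow> cd k = A \<Longrightarrow> dg A C (k \<cdot> q2 A C) = k"
  using fixp[of "k \<cdot> q2 A C" A C] by simp

lemma DI: "dm h = B \<otimes> C \<Longrightarrow> cd h = B \<Longrightarrow> dm r = B \<Longrightarrow> cd r = A \<Longrightarrow> dm s = A \<Longrightarrow> cd s = B \<Longrightarrow>
   dg A C (r \<cdot> h \<cdot> tm s (idm C)) = r \<cdot> dg B C (h \<cdot> tm (s \<cdot> r) (idm C))"
proof -
  assume a: "dm h = B \<otimes> C" "cd h = B" "dm r = B" "cd r = A" "dm s = A" "cd s = B"
  have 1: "dg A C (r \<cdot> h \<cdot> pa (s \<cdot> q1 A C) (q2 A C)) = r \<cdot> h \<cdot> pa (dg B C (s \<cdot> q1 A C \<cdot> pa (r \<cdot> h) (q2 B C))) (idm C)"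
    using ax_comp[of "r \<cdot> h" B C A "s \<cdot> q1 A C"] a by simp
  have 2: "dg B C (h \<cdot> pa (s \<cdot> r \<cdot> q1 B C) (q2 B C)) = h \<cdot> pa (dg B C (s \<cdot> r \<cdot> q1 B C \<cdot> pa h (q2 B C))) (idm C)"
    using ax_comp[of h B C B "s \<cdot> r \<cdot> q1 B C"] a by simp
  have 3: "s \<cdot> q1 A C \<cdot> pa (r \<cdot> h) (q2 B C) = s \<cdot> r \<cdot> h" using a by simp
  have 4: "s \<cdot> r \<cdot> q1 B C \<cdot> pa h (q2 B C) = s \<cdot> r \<cdot> h" using a by simp
  show ?thesis using 1 2 3 4 a by (simp add: tm_def')
qed

section \<open>Bekic\<close>

lemma bekic:
  assumes h: "dm h = (X \<otimes> Y) \<otimes> C" "cd h = X \<otimes> Y"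
  defines "gr \<equiv> q2 X Y \<cdot> h \<cdot> pa (q1 X C \<cdot> q2 Y (X \<otimes> C)) (pa (q1 Y (X \<otimes> C)) (q2 X C \<cdot> q2 Y (X \<otimes> C)))"
  defines "G \<equiv> dg Y (X \<otimes> C) gr"
  defines "e \<equiv> q1 X Y \<cdot> h \<cdot> pa (q1 X C) (pa G (q2 X C))"
  shows "q1 X Y \<cdot> dg (X \<otimes> Y) C h = dg X C e"
    "q2 X Y \<cdot> dg (X \<otimes> Y) C h = G \<cdot> pa (dg X C e) (idm C)"
proof -
  define A where "A = X \<otimes> Y"
  define W where "W = A \<otimes> C"
  have hA: "dm h = A \<otimes> C" "cd h = A" using h by (simp_all add: A_def)
  have gr_ty: "dm gr = Y \<otimes> (X \<otimes> C)" "cd gr = Y" using h by (simp_all add: gr_def)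
  have G_ty: "dm G = X \<otimes> C" "cd G = Y" using gr_ty by (simp_all add: G_def)
  define F where "F = h \<cdot> pa (q1 X Y \<cdot> q1 A C \<cdot> q2 A W) (pa (q2 X Y \<cdot> q1 A W) (q2 A C \<cdot> q2 A W))"
  have F_ty: "dm F = A \<otimes> W" "cd F = A" using h by (simp_all add: F_def A_def W_def)
  have 1: "F \<cdot> tm (pa (idm A) (idm A)) (idm C) = h"
  proof -
    have "F \<cdot> tm (pa (idm A) (idm A)) (idm C) = h \<cdot> pa (q1 X Y \<cdot> q1 A C) (pa (q2 X Y \<cdot> q1 A C) (q2 A C))"
      using h by (simp add: F_def A_def W_def tm_def')
    also have "\<dots> = h" using h mor_assoc[of X Y C] by (simp add: A_def)
    finally show ?thesis .
  qed
  have dd: "dg A C h = dg A C (dg A W F)"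
    using ax_dd[of F A C] F_ty 1 by (simp add: W_def)
  define K where "K = h \<cdot> pa (q1 X Y \<cdot> q1 A C \<cdot> q2 Y W) (pa (q1 Y W) (q2 A C \<cdot> q2 Y W))"
  have K_ty: "dm K = Y \<otimes> W" "cd K = A" using h by (simp_all add: K_def A_def W_def)
  have 2: "F = K \<cdot> pa (q2 X Y \<cdot> q1 A W) (q2 A W)"
    using h by (simp add: F_def K_def A_def W_def)
  have 3: "dg A W F = K \<cdot> pa (dg Y W (q2 X Y \<cdot> q1 A W \<cdot> pa K (q2 Y W))) (idm W)"
    unfolding 2 using ax_comp[of K Y W A "q2 X Y \<cdot> q1 A W"] K_ty h by (simp add: A_def W_def)
  have 4: "q2 X Y \<cdot> q1 A W \<cdot> pa K (q2 Y W) = gr \<cdot> tm (idm Y) (tm (q1 X Y) (idm C))"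
    using h K_ty by (simp add: K_def gr_def A_def W_def tm_def')
  have 5: "dg Y W (gr \<cdot> tm (idm Y) (tm (q1 X Y) (idm C))) = G \<cdot> tm (q1 X Y) (idm C)"
    unfolding G_def using ax_param[of gr Y "X \<otimes> C" "tm (q1 X Y) (idm C)" W] gr_ty by (simp add: A_def W_def)
  define L where "L = h \<cdot> pa (q1 X C) (pa G (q2 X C))"
  have L_ty: "dm L = X \<otimes> C" "cd L = A" using h G_ty by (simp_all add: L_def A_def)
  have 6: "dg A W F = L \<cdot> tm (q1 X Y) (idm C)"
    unfolding 3 4 5 using h G_ty by (simp add: K_def L_def A_def W_def tm_def')
  have 7: "L \<cdot> tm (q1 X Y) (idm C) = L \<cdot> pa (q1 X Y \<cdot> q1 A C) (q2 A C)"
    by (simp add: tm_def' A_def)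
  have 8: "dg A C (L \<cdot> pa (q1 X Y \<cdot> q1 A C) (q2 A C)) = L \<cdot> pa (dg X C (q1 X Y \<cdot> q1 A C \<cdot> pa L (q2 X C))) (idm C)"
    using ax_comp[of L X C A "q1 X Y \<cdot> q1 A C"] L_ty by (simp add: A_def)
  have e': "q1 X Y \<cdot> q1 A C \<cdot> pa L (q2 X C) = e" using h G_ty by (simp add: e_def L_def A_def)
  have main: "dg A C h = L \<cdot> pa (dg X C e) (idm C)"
    using dd 6 7 8 e' by simp
  have e_ty: "dm e = X \<otimes> C" "cd e = X" using h G_ty by (simp_all add: e_def)
  have q1L: "q1 X Y \<cdot> L = e" using h G_ty by (simp add: e_def L_def)
  show "q1 X Y \<cdot> dg (X \<otimes> Y) C h = dg X C e"
  proof -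
    have "q1 X Y \<cdot> dg (X \<otimes> Y) C h = q1 X Y \<cdot> L \<cdot> pa (dg X C e) (idm C)"
      using main[unfolded A_def] L_ty e_ty by (simp add: A_def)
    also have "\<dots> = dg X C e" using q1L fixp[of e X C] e_ty by simp
    finally show ?thesis .
  qed
  have q2L: "q2 X Y \<cdot> L = G"
  proof -
    have "q2 X Y \<cdot> L = gr \<cdot> pa G (idm (X \<otimes> C))"
      using h G_ty by (simp add: gr_def L_def)
    also have "\<dots> = G" using fixp[of gr Y "X \<otimes> C"] gr_ty by (simp add: G_def)
    finally show ?thesis .
  qed
  show "q2 X Y \<cdot> dg (X \<otimes> Y) C h = G \<cdot> pa (dg X C e) (idm C)"
    using main[unfolded A_def] q2L L_ty e_ty G_ty by (simp add: A_def)
qed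

end

context conway begin

abbreviation cpw where "cpw A n \<equiv> cpow S A n"
abbreviation np where "np A n i \<equiv> nproj S A n i"

definition tup :: "nat \<Rightarrow> (nat \<Rightarrow> 'm) \<Rightarrow> 'm" where
  "tup n F = ntuple S (map F [0..<n])"

definition bm :: "'o \<Rightarrow> nat \<Rightarrow> (nat \<Rightarrow> nat) \<Rightarrow> nat \<Rightarrow> 'm" where
  "bm A N \<alpha> p = tup p (\<lambda>i. np A N (\<alpha> i))"

lemma cpw_Suc: "0 < n \<Longrightarrow> cpw A (Suc n) = A \<otimes> cpw A n"
  by (cases n) auto

lemma np_Suc: "0 < n \<Longrightarrow> np A (Suc n) i = (if i = 0 then q1 A (cpw A n) else np A n (i - 1) \<cdot> q2 A (cpw A n))"
  by (cases n) auto

lemma tup_1[simp]: "tup (Suc 0) F = F 0"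
  by (simp add: tup_def)

lemma tup_Suc: "0 < n \<Longrightarrow> tup (Suc n) F = pa (F 0) (tup n (\<lambda>i. F (Suc i)))"
  by (cases n) (auto simp: tup_def map_upt_Suc simp del: upt_Suc)

lemma np_ty[simp]: "i < n \<Longrightarrow> dm (np A n i) = cpw A n" "i < n \<Longrightarrow> cd (np A n i) = A"
proof (induction n arbitrary: i)
  case 0 { case 1 then show ?case by simp } { case 2 then show ?case by simp }
next
  case (Suc n)
  { case 1 then show ?case using Suc by (cases "n = 0") (auto simp: np_Suc cpw_Suc) }
  { case 2 then show ?case using Suc by (cases "n = 0") (auto simp: np_Suc cpw_Suc) }
qed

lemma tup_ty[simp]: "0 < n \<Longrightarrow> (\<And>i. i < n \<Longrightarrow> dm (F i) = D) \<Longrightarrow> dm (tup n F) = D"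
proof (induction n arbitrary: F)
  case 0 then show ?case by simp
next
  case (Suc n) then show ?case by (cases "n = 0") (auto simp: tup_Suc)
qed

lemma tup_cd[simp]: "0 < n \<Longrightarrow> (\<And>i. i < n \<Longrightarrow> dm (F i) = D) \<Longrightarrow> (\<And>i. i < n \<Longrightarrow> cd (F i) = A) \<Longrightarrow> cd (tup n F) = cpw A n"
proof (induction n arbitrary: F)
  case 0 then show ?case by simp
next
  case (Suc n) then show ?case by (cases "n = 0") (auto simp: tup_Suc cpw_Suc)
qed

lemma proj_tup[simp]: "i < n \<Longrightarrow> (\<And>i. i < n \<Longrightarrow> dm (F i) = D) \<Longrightarrow> (\<And>i. i < n \<Longrightarrow> cd (F i) = A) \<Longrightarrow> np A n i \<cdot> tup n F = F i"
proof (induction n arbitrary: F i)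
  case 0 then show ?case by simp
next
  case (Suc n)
  show ?case
  proof (cases "n = 0")
    case True then show ?thesis using Suc by simp
  next
    case False
    then have n0: "0 < n" by simp
    show ?thesis
    proof (cases "i = 0")
      case True then show ?thesis using Suc n0 by (simp add: tup_Suc np_Suc)
    next
      case False
      then obtain j where ij: "i = Suc j" by (cases i) auto
      have jn: "j < n" using ij Suc.prems(1) by simp
      have "np A (Suc n) i \<cdot> tup (Suc n) F = np A n j \<cdot> q2 A (cpw A n) \<cdot> pa (F 0) (tup n (\<lambda>i. F (Suc i)))"
        using n0 ij by (simp add: tup_Suc np_Suc)
      also have "\<dots> = np A n j \<cdot> tup n (\<lambda>i. F (Suc i))"
        using n0 jn Suc.prems by (subst q2_pa') auto
      also have "\<dots> = F i" using Suc.IH[of j "\<lambda>i. F (Suc i)"] Suc.prems ij jn by auto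
      finally show ?thesis .
    qed
  qed
qed

lemma tup_cm: "0 < n \<Longrightarrow> (\<And>i. i < n \<Longrightarrow> dm (F i) = D) \<Longrightarrow> cd k = D \<Longrightarrow> tup n F \<cdot> k = tup n (\<lambda>i. F i \<cdot> k)"
proof (induction n arbitrary: F)
  case 0 then show ?case by simp
next
  case (Suc n) then show ?case by (cases "n = 0") (auto simp: tup_Suc)
qed

lemma tup_cong: "(\<And>i. i < n \<Longrightarrow> F i = G i) \<Longrightarrow> tup n F = tup n G"
  unfolding tup_def by (rule arg_cong[where f="ntuple S"]) simp

lemma tup_ext: "0 < n \<Longrightarrow> cd h = cpw A n \<Longrightarrow> cd h' = cpw A n \<Longrightarrow> (\<And>i. i < n \<Longrightarrow> np A n i \<cdot> h = np A n i \<cdot> h') \<Longrightarrow> h = h'"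
proof (induction n arbitrary: h h')
  case 0 then show ?case by simp
next
  case (Suc n)
  show ?case
  proof (cases "n = 0")
    case True then show ?thesis using Suc.prems(4)[of 0] Suc.prems by simp
  next
    case False
    then have n0: "0 < n" by simp
    have c: "cd h = A \<otimes> cpw A n" "cd h' = A \<otimes> cpw A n" using Suc.prems n0 by (auto simp: cpw_Suc)
    show ?thesis
    proof (rule pa_ext[OF c])
      show "q1 A (cpw A n) \<cdot> h = q1 A (cpw A n) \<cdot> h'" using Suc.prems(4)[of 0] n0 by (simp add: np_Suc)
      show "q2 A (cpw A n) \<cdot> h = q2 A (cpw A n) \<cdot> h'"
      proof (rule Suc.IH)
        show "0 < n" by (rule n0)
        show "cd (q2 A (cpw A n) \<cdot> h) = cpw A n" "cd (q2 A (cpw A n) \<cdot> h') = cpw A n" using c by simp_all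
        fix i assume i: "i < n"
        have "np A (Suc n) (Suc i) \<cdot> h = np A (Suc n) (Suc i) \<cdot> h'" using Suc.prems(4)[of "Suc i"] i by simp
        then show "np A n i \<cdot> (q2 A (cpw A n) \<cdot> h) = np A n i \<cdot> (q2 A (cpw A n) \<cdot> h')"
          using n0 i c by (simp add: np_Suc)
      qed
    qed
  qed
qed

lemma tup_eta: "0 < n \<Longrightarrow> cd h = cpw A n \<Longrightarrow> tup n (\<lambda>i. np A n i \<cdot> h) = h"
  by (rule tup_ext[of n _ A]) auto


lemma bm_ty[simp]: "0 < p \<Longrightarrow> (\<And>i. i < p \<Longrightarrow> \<alpha> i < N) \<Longrightarrow> dm (bm A N \<alpha> p) = cpw A N"
  "0 < p \<Longrightarrow> (\<And>i. i < p \<Longrightarrow> \<alpha> i < N) \<Longrightarrow> cd (bm A N \<alpha> p) = cpw A p"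
  unfolding bm_def by auto

lemma proj_bm[simp]: "i < p \<Longrightarrow> (\<And>i. i < p \<Longrightarrow> \<alpha> i < N) \<Longrightarrow> np A p i \<cdot> bm A N \<alpha> p = np A N (\<alpha> i)"
  unfolding bm_def by (rule proj_tup) auto

lemma proj_bm'[simp]: "i < p \<Longrightarrow> (\<And>i. i < p \<Longrightarrow> \<alpha> i < N) \<Longrightarrow> dm h = A \<Longrightarrow> h \<cdot> np A p i \<cdot> bm A N \<alpha> p = h \<cdot> np A N (\<alpha> i)"
  by (subst assoc[symmetric]) auto

lemma proj_tup'[simp]: "i < n \<Longrightarrow> (\<And>i. i < n \<Longrightarrow> dm (F i) = D) \<Longrightarrow> (\<And>i. i < n \<Longrightarrow> cd (F i) = A) \<Longrightarrow> dm h = A \<Longrightarrow> h \<cdot> np A n i \<cdot> tup n F = h \<cdot> F i"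
  by (subst assoc[symmetric]) auto

lemma bm_cm: "0 < p \<Longrightarrow> (\<And>i. i < p \<Longrightarrow> \<alpha> i < N) \<Longrightarrow> cd k = cpw A N \<Longrightarrow> bm A N \<alpha> p \<cdot> k = tup p (\<lambda>i. np A N (\<alpha> i) \<cdot> k)"
  unfolding bm_def by (rule tup_cm) auto

lemma bm_bm: "0 < p \<Longrightarrow> 0 < N \<Longrightarrow> (\<And>i. i < p \<Longrightarrow> \<alpha> i < N) \<Longrightarrow> (\<And>i. i < N \<Longrightarrow> \<beta> i < M) \<Longrightarrow>
   bm A N \<alpha> p \<cdot> bm A M \<beta> N = bm A M (\<lambda>i. \<beta> (\<alpha> i)) p"
  by (subst bm_cm) (auto simp: bm_def intro!: tup_cong)

lemma bm_id: "0 < N \<Longrightarrow> bm A N (\<lambda>i. i) N = idm (cpw A N)"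
  by (rule tup_ext[of N _ A]) auto

lemma bm_cong: "(\<And>i. i < p \<Longrightarrow> \<alpha> i = \<beta> i) \<Longrightarrow> bm A N \<alpha> p = bm A N \<beta> p"
  unfolding bm_def by (rule tup_cong) simp

abbreviation dgl where "dgl A n \<equiv> cdiag S A n"

lemma cdiag_tup: "dgl A n = tup n (\<lambda>i. idm A)"
  by (simp add: cdiag_def tup_def map_replicate_const)

lemma cdiag_ty[simp]: "0 < n \<Longrightarrow> dm (dgl A n) = A" "0 < n \<Longrightarrow> cd (dgl A n) = cpw A n"
  by (simp_all add: cdiag_tup)

lemma proj_cdiag[simp]: "i < n \<Longrightarrow> np A n i \<cdot> dgl A n = idm A"
  by (simp add: cdiag_tup)

lemma proj_cdiag'[simp]: "i < n \<Longrightarrow> dm h = A \<Longrightarrow> h \<cdot> np A n i \<cdot> dgl A n = h"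
  by (subst assoc[symmetric]) auto

lemma bm_cdiag: "0 < p \<Longrightarrow> 0 < N \<Longrightarrow> (\<And>i. i < p \<Longrightarrow> \<alpha> i < N) \<Longrightarrow> bm A N \<alpha> p \<cdot> dgl A N = dgl A p"
  by (rule tup_ext[of p _ A]) auto

lemma cdiag_1[simp]: "dgl A (Suc 0) = idm A"
  by (simp add: cdiag_tup)

lemma q1_assoc_eq: "q1 A (B \<otimes> C) = q1 A B \<cdot> q1 (A \<otimes> B) C"
proof -
  have "q1 A (B \<otimes> C) = q1 A (B \<otimes> C) \<cdot> idm (A \<otimes> (B \<otimes> C))" by simp
  also have "\<dots> = q1 A B \<cdot> q1 (A \<otimes> B) C" by (simp add: mor_assoc[symmetric] del: pa_assoc)
  finally show ?thesis .
qed

lemma q2_assoc_eq: "q2 A (B \<otimes> C) = pa (q2 A B \<cdot> q1 (A \<otimes> B) C) (q2 (A \<otimes> B) C)"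
proof -
  have "q2 A (B \<otimes> C) = q2 A (B \<otimes> C) \<cdot> idm (A \<otimes> (B \<otimes> C))" by simp
  also have "\<dots> = pa (q2 A B \<cdot> q1 (A \<otimes> B) C) (q2 (A \<otimes> B) C)" by (simp add: mor_assoc[symmetric] del: pa_assoc)
  finally show ?thesis .
qed

lemma cpw_add: "0 < p \<Longrightarrow> 0 < r \<Longrightarrow> cpw A (p + r) = cpw A p \<otimes> cpw A r"
proof (induction p)
  case 0 then show ?case by simp
next
  case (Suc p) then show ?case by (cases "p = 0") (auto simp: cpw_Suc)
qed

lemma np_add1: "i < p \<Longrightarrow> 0 < r \<Longrightarrow> np A (p + r) i = np A p i \<cdot> q1 (cpw A p) (cpw A r)"
proof (induction p arbitrary: i)
  case 0 then show ?case by simp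
next
  case (Suc p)
  show ?case
  proof (cases "p = 0")
    case True then show ?thesis using Suc by (simp add: np_Suc)
  next
    case False
    then have p0: "0 < p" by simp
    have e: "Suc p + r = Suc (p + r)" by simp
    show ?thesis
    proof (cases "i = 0")
      case True then show ?thesis using p0 Suc.prems
        by (simp only: e np_Suc cpw_add cpw_Suc) (simp add: q1_assoc_eq)
    next
      case False
      then obtain j where ij: "i = Suc j" by (cases i) auto
      have "np A (Suc p + r) i = np A (p + r) j \<cdot> q2 A (cpw A (p + r))"
        using ij p0 Suc.prems by (simp only: e np_Suc) simp
      also have "\<dots> = np A p j \<cdot> q1 (cpw A p) (cpw A r) \<cdot> q2 A (cpw A p \<otimes> cpw A r)"
        using Suc.IH[of j] ij Suc.prems p0 by (simp add: cpw_add)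
      also have "\<dots> = np A p j \<cdot> q2 A (cpw A p) \<cdot> q1 (A \<otimes> cpw A p) (cpw A r)"
        using ij Suc.prems p0 by (simp add: q2_assoc_eq)
      also have "\<dots> = np A (Suc p) i \<cdot> q1 (cpw A (Suc p)) (cpw A r)"
        using ij Suc.prems p0 by (simp add: np_Suc cpw_Suc)
      finally show ?thesis .
    qed
  qed
qed

lemma np_add2: "i < r \<Longrightarrow> 0 < p \<Longrightarrow> np A (p + r) (p + i) = np A r i \<cdot> q2 (cpw A p) (cpw A r)"
proof (induction p)
  case 0 then show ?case by simp
next
  case (Suc p)
  show ?case
  proof (cases "p = 0")
    case True then show ?thesis using Suc by (simp add: np_Suc)
  next
    case False
    then have p0: "0 < p" by simp
    have e: "Suc p + r = Suc (p + r)" by simp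
    have r0: "0 < r" using Suc.prems by simp
    have "np A (Suc p + r) (Suc p + i) = np A (p + r) (p + i) \<cdot> q2 A (cpw A (p + r))"
      using p0 r0 by (simp only: e np_Suc) simp
    also have "\<dots> = np A r i \<cdot> q2 (cpw A p) (cpw A r) \<cdot> q2 A (cpw A p \<otimes> cpw A r)"
      using Suc.IH Suc.prems p0 by (simp add: cpw_add)
    also have "\<dots> = np A r i \<cdot> q2 (cpw A (Suc p)) (cpw A r)"
      using Suc.prems p0 by (simp add: q2_assoc_eq cpw_Suc)
    finally show ?thesis .
  qed
qed

lemma cpw_mult: "0 < n \<Longrightarrow> 0 < p \<Longrightarrow> cpw (cpw A p) n = cpw A (n * p)"
proof (induction n)
  case 0 then show ?case by simp
next
  case (Suc n) then show ?case
    by (cases "n = 0") (auto simp: cpw_Suc cpw_add[symmetric])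
qed

lemma np_mult: "i < n \<Longrightarrow> j < p \<Longrightarrow> np A (n * p) (i * p + j) = np A p j \<cdot> np (cpw A p) n i"
proof (induction n arbitrary: i)
  case 0 then show ?case by simp
next
  case (Suc n)
  show ?case
  proof (cases "n = 0")
    case True then show ?thesis using Suc by simp
  next
    case False
    then have n0: "0 < n" by simp
    have e: "Suc n * p = p + n * p" by simp
    have np0: "0 < n * p" using n0 Suc.prems by simp
    show ?thesis
    proof (cases "i = 0")
      case True then show ?thesis using Suc.prems n0 np0
        by (simp only: e np_add1 np_Suc) (simp add: cpw_mult)
    next
      case False
      then obtain i' where ii: "i = Suc i'" by (cases i) auto
      have e2: "i * p + j = p + (i' * p + j)" using ii by simp
      have lt: "i' * p + j < n * p" using ii Suc.prems
      proof -
        have "i' < n" using ii Suc.prems by simp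
        then have "i' * p + p \<le> n * p" by (metis add.commute mult_Suc less_eq_Suc_le mult_le_mono1)
        then show ?thesis using Suc.prems(2) by linarith
      qed
      have "np A (Suc n * p) (i * p + j) = np A (n * p) (i' * p + j) \<cdot> q2 (cpw A p) (cpw A (n * p))"
        using np_add2[OF lt, of p A] Suc.prems(2) by (simp only: e e2)
      also have "\<dots> = np A p j \<cdot> np (cpw A p) n i' \<cdot> q2 (cpw A p) (cpw (cpw A p) n)"
        using Suc.IH[of i'] ii Suc.prems n0 by (simp add: cpw_mult)
      also have "\<dots> = np A p j \<cdot> np (cpw A p) (Suc n) i"
        using ii Suc.prems n0 by (simp add: np_Suc)
      finally show ?thesis .
    qed
  qed
qed

end

lemma perm_ext:
  assumes inj: "inj_on \<alpha> {..<p}" and rng: "\<forall>i<p. \<alpha> i < (N::nat)" and pN: "p \<le> N"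
  obtains \<pi> \<pi>i where "\<forall>i<N. \<pi> i < N" "\<forall>i<p. \<pi> i = \<alpha> i" "\<forall>j<N. \<pi>i j < N \<and> \<pi> (\<pi>i j) = j" "\<forall>i<N. \<pi>i (\<pi> i) = i"
proof -
  define xs where "xs = map \<alpha> [0..<p] @ filter (\<lambda>j. j \<notin> \<alpha> ` {..<p}) [0..<N]"
  have d: "distinct xs" unfolding xs_def using inj
    by (auto simp: distinct_map lessThan_atLeast0)
  have s: "set xs = {..<N}" unfolding xs_def using rng by auto
  have l: "length xs = N" using distinct_card[OF d] s by simp
  have b: "bij_betw ((!) xs) {..<N} {..<N}" using bij_betw_nth[OF d] l s by simp
  define \<pi> where "\<pi> = (!) xs"
  define \<pi>i where "\<pi>i = the_inv_into {..<N} \<pi>"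
  have inj\<pi>: "inj_on \<pi> {..<N}" using b by (simp add: bij_betw_def \<pi>_def)
  have im: "\<pi> ` {..<N} = {..<N}" using b by (simp add: bij_betw_def \<pi>_def)
  show ?thesis
  proof
    show "\<forall>i<N. \<pi> i < N" using im by auto
    show "\<forall>i<p. \<pi> i = \<alpha> i" unfolding \<pi>_def xs_def by (auto simp: nth_append)
    show "\<forall>j<N. \<pi>i j < N \<and> \<pi> (\<pi>i j) = j" unfolding \<pi>i_def
      using the_inv_into_into[OF inj\<pi>] f_the_inv_into_f[OF inj\<pi>] im by auto
    show "\<forall>i<N. \<pi>i (\<pi> i) = i" unfolding \<pi>i_def using the_inv_into_f_f[OF inj\<pi>] by auto
  qed
qed

context conway begin

lemma tm_pa_assoc[simp]: "dm a = dm b \<Longrightarrow> dm b = dm c \<Longrightarrow> dm f = cd a \<otimes> cd b \<Longrightarrow> dm g = cd c \<Longrightarrow>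
  tm f g \<cdot> pa a (pa b c) = pa (f \<cdot> pa a b) (g \<cdot> c)"
  by (metis pa_assoc pa_ty(1) pa_ty(2) tm_pa)

lemma tm_pa_assoc'[simp]: "dm a = dm b \<Longrightarrow> dm b = dm c \<Longrightarrow> dm f = cd a \<otimes> cd b \<Longrightarrow> dm g = cd c \<Longrightarrow> dm h = cd f \<otimes> cd g \<Longrightarrow>
  h \<cdot> tm f g \<cdot> pa a (pa b c) = h \<cdot> pa (f \<cdot> pa a b) (g \<cdot> c)"
  by (subst assoc[symmetric]) auto


lemma bekgen_perm:
  assumes p0: "0 < p" "p < N"
  and \<pi>: "\<forall>i<N. \<pi> i < N" "\<forall>i<p. \<pi> i = \<alpha> i" "\<forall>j<N. \<pi>i j < N \<and> \<pi> (\<pi>i j) = j" "\<forall>i<N. \<pi>i (\<pi> i) = i"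
  and \<beta>: "\<forall>i<p. \<beta> (\<alpha> i) = i" "\<forall>j<N. \<beta> j < p"
  and h: "dm h = cpw A N \<otimes> C" "cd h = cpw A N"
  and hyp: "(bm A N \<alpha> p \<cdot> h = bm A N \<alpha> p \<cdot> h \<cdot> tm (bm A p \<beta> N \<cdot> bm A N \<alpha> p) (idm C)) \<or>
            (\<forall>j<N. j \<notin> \<alpha> ` {..<p} \<longrightarrow> np A N j \<cdot> h = np A N (\<alpha> (\<beta> j)) \<cdot> q1 (cpw A N) C)"
  shows "bm A N \<alpha> p \<cdot> dg (cpw A N) C h = dg (cpw A p) C (bm A N \<alpha> p \<cdot> h \<cdot> tm (bm A p \<beta> N) (idm C))"
proof -
  define r where "r = N - p"
  have Nr: "N = p + r" and r0: "0 < r" using p0 by (auto simp: r_def)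
  define X where "X = cpw A p"
  define Y where "Y = cpw A r"
  have XY[simp]: "cpw A N = X \<otimes> Y" by (simp add: Nr cpw_add p0 r0 X_def Y_def)
  have N0: "0 < N" using p0 by simp
  have \<alpha>N: "\<And>i. i < p \<Longrightarrow> \<alpha> i < N" using \<pi> p0 by (metis order.strict_trans)
  have np1: "\<And>i. i < p \<Longrightarrow> np A N i = np A p i \<cdot> q1 X Y" using np_add1[OF _ r0] by (simp add: Nr X_def Y_def)
  have np2: "\<And>i. i < r \<Longrightarrow> np A N (p + i) = np A r i \<cdot> q2 X Y" using np_add2[OF _ p0(1)] by (simp add: Nr X_def Y_def)
  have cX[simp]: "cpw A p = X" by (simp add: X_def)
  have cY[simp]: "cpw A r = Y" by (simp add: Y_def)
  define P where "P = bm A N \<pi> N"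
  define P' where "P' = bm A N \<pi>i N"
  have P_ty[simp]: "dm P = X \<otimes> Y" "cd P = X \<otimes> Y" using \<pi> N0 by (simp_all add: P_def)
  have P'_ty[simp]: "dm P' = X \<otimes> Y" "cd P' = X \<otimes> Y" using \<pi> N0 by (simp_all add: P'_def)
  have PP': "P \<cdot> P' = idm (X \<otimes> Y)"
    unfolding P_def P'_def using \<pi> N0 bm_id[OF N0, of A] by (subst bm_bm) (auto cong: bm_cong)
  have P'P: "P' \<cdot> P = idm (X \<otimes> Y)"
    unfolding P_def P'_def using \<pi> N0 bm_id[OF N0, of A] by (subst bm_bm) (auto cong: bm_cong)
  define \<rho> where "\<rho> = bm A N \<alpha> p"
  define \<sigma> where "\<sigma> = bm A p \<beta> N"
  have \<rho>_ty[simp]: "dm \<rho> = X \<otimes> Y" "cd \<rho> = X" using \<alpha>N p0 by (simp_all add: \<rho>_def)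
  have \<sigma>_ty[simp]: "dm \<sigma> = X" "cd \<sigma> = X \<otimes> Y" using \<beta> N0 by (simp_all add: \<sigma>_def)
  have \<rho>_eq: "\<rho> = q1 X Y \<cdot> P"
  proof (rule tup_ext[of p _ A])
    fix i assume i: "i < p"
    have "np A p i \<cdot> (q1 X Y \<cdot> P) = np A p i \<cdot> q1 X Y \<cdot> P" using i by simp
    also have "\<dots> = np A N i \<cdot> P" using np1[OF i] by simp
    also have "\<dots> = np A N (\<alpha> i)" using i \<pi> p0 unfolding P_def by (subst proj_bm) auto
    finally show "np A p i \<cdot> \<rho> = np A p i \<cdot> (q1 X Y \<cdot> P)"
      using i \<alpha>N unfolding \<rho>_def by simp
  qed (use p0 in auto)
  define h' where "h' = P \<cdot> h \<cdot> tm P' (idm C)"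
  have h'_ty: "dm h' = (X \<otimes> Y) \<otimes> C" "cd h' = X \<otimes> Y" using h by (simp_all add: h'_def)
  have dgh': "dg (X \<otimes> Y) C h' = P \<cdot> dg (X \<otimes> Y) C h"
    using DI[of h "X \<otimes> Y" C P "X \<otimes> Y" P'] h P'P by (simp add: h'_def tm_id)
  define gr where "gr = q2 X Y \<cdot> h' \<cdot> pa (q1 X C \<cdot> q2 Y (X \<otimes> C)) (pa (q1 Y (X \<otimes> C)) (q2 X C \<cdot> q2 Y (X \<otimes> C)))"
  define G where "G = dg Y (X \<otimes> C) gr"
  define e where "e = q1 X Y \<cdot> h' \<cdot> pa (q1 X C) (pa G (q2 X C))"
  have gr_ty: "dm gr = Y \<otimes> (X \<otimes> C)" "cd gr = Y" using h'_ty by (simp_all add: gr_def)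
  have G_ty: "dm G = X \<otimes> C" "cd G = Y" using gr_ty by (simp_all add: G_def)
  have B: "q1 X Y \<cdot> dg (X \<otimes> Y) C h' = dg X C e"
    using bekic(1)[OF h'_ty] unfolding e_def G_def gr_def .
  have lhs: "\<rho> \<cdot> dg (X \<otimes> Y) C h = dg X C e"
    using B h unfolding \<rho>_eq dgh' by simp
  have q1h': "q1 X Y \<cdot> h' = \<rho> \<cdot> h \<cdot> tm P' (idm C)"
    using h unfolding h'_def \<rho>_eq by simp
  have \<rho>P': "\<rho> \<cdot> P' = q1 X Y" using PP' unfolding \<rho>_eq by (simp del: assoc add: assoc[symmetric])
  have e_eq: "e = \<rho> \<cdot> h \<cdot> tm \<sigma> (idm C)"
    using hyp
  proof
    assume sub: "bm A N \<alpha> p \<cdot> h = bm A N \<alpha> p \<cdot> h \<cdot> tm (bm A p \<beta> N \<cdot> bm A N \<alpha> p) (idm C)"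
    have "e = \<rho> \<cdot> h \<cdot> tm P' (idm C) \<cdot> pa (q1 X C) (pa G (q2 X C))"
      using h G_ty unfolding e_def q1h'[symmetric] by simp
    also have "\<dots> = \<rho> \<cdot> h \<cdot> tm (\<sigma> \<cdot> \<rho>) (idm C) \<cdot> tm P' (idm C) \<cdot> pa (q1 X C) (pa G (q2 X C))"
      using sub unfolding \<rho>_def[symmetric] \<sigma>_def[symmetric] by simp
    also have "\<dots> = \<rho> \<cdot> h \<cdot> tm (\<sigma> \<cdot> q1 X Y) (idm C) \<cdot> pa (q1 X C) (pa G (q2 X C))"
      using h \<rho>P' by (simp del: assoc add: assoc[symmetric])
    also have "\<dots> = \<rho> \<cdot> h \<cdot> tm \<sigma> (idm C)"
      using h G_ty by (simp add: tm_def')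
    finally show ?thesis .
  next
    assume elim: "\<forall>j<N. j \<notin> \<alpha> ` {..<p} \<longrightarrow> np A N j \<cdot> h = np A N (\<alpha> (\<beta> j)) \<cdot> q1 (cpw A N) C"
    define D where "D = tup r (\<lambda>i. np A p (\<beta> (\<pi> (p + i))))"
    have Dr: "\<And>i. i < r \<Longrightarrow> \<beta> (\<pi> (p + i)) < p" using \<beta> \<pi> Nr by simp
    have D_ty: "dm D = X" "cd D = Y" using Dr r0 by (simp_all add: D_def)
    have \<pi>i\<alpha>: "\<And>k. k < p \<Longrightarrow> \<pi>i (\<alpha> k) = k" using \<pi> p0 by (metis order.strict_trans)
    have q2h': "q2 X Y \<cdot> h' = D \<cdot> q1 X Y \<cdot> q1 (X \<otimes> Y) C"
    proof (rule tup_ext[of r _ A])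
      fix i assume i: "i < r"
      have pi_n: "\<pi> (p + i) \<notin> \<alpha> ` {..<p}"
      proof
        assume "\<pi> (p + i) \<in> \<alpha> ` {..<p}"
        then obtain k where k: "k < p" "\<pi> (p + i) = \<alpha> k" by auto
        then have "\<pi> (p + i) = \<pi> k" using \<pi> by simp
        then have "\<pi>i (\<pi> (p + i)) = \<pi>i (\<pi> k)" by simp
        moreover have "\<pi>i (\<pi> (p + i)) = p + i" using \<pi> i Nr by simp
        moreover have "\<pi>i (\<pi> k) = k" using \<pi>i\<alpha>[OF k(1)] \<pi> k by simp
        ultimately show False using k by simp
      qed
      have piN: "\<pi> (p + i) < N" using \<pi> i Nr by simp
      have b1: "\<beta> (\<pi> (p + i)) < p" using \<beta> piN by simp
      have piN': "p + i < N" using i Nr by simp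
      have "np A r i \<cdot> (q2 X Y \<cdot> h') = np A N (p + i) \<cdot> h'"
        using i h'_ty by (simp add: np2)
      also have "\<dots> = np A N (\<pi> (p + i)) \<cdot> h \<cdot> tm P' (idm C)"
        using piN' h \<pi> N0 unfolding h'_def P_def by simp
      also have "\<dots> = np A N (\<alpha> (\<beta> (\<pi> (p + i)))) \<cdot> q1 (X \<otimes> Y) C \<cdot> tm P' (idm C)"
        using elim pi_n piN h by simp
      also have "\<dots> = np A N (\<alpha> (\<beta> (\<pi> (p + i)))) \<cdot> P' \<cdot> q1 (X \<otimes> Y) C"
        using b1 \<alpha>N by (simp add: tm_def')
      also have "\<dots> = np A N (\<beta> (\<pi> (p + i))) \<cdot> q1 (X \<otimes> Y) C"
        using b1 \<alpha>N \<pi> \<pi>i\<alpha>[OF b1] unfolding P'_def by simp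
      also have "\<dots> = np A r i \<cdot> (D \<cdot> q1 X Y \<cdot> q1 (X \<otimes> Y) C)"
        using b1 i D_ty Dr r0 unfolding np1[OF b1] by (simp add: D_def)
      finally show "np A r i \<cdot> (q2 X Y \<cdot> h') = np A r i \<cdot> (D \<cdot> q1 X Y \<cdot> q1 (X \<otimes> Y) C)" .
    qed (use r0 h'_ty D_ty in auto)
    have gr_eq: "gr = D \<cdot> q1 X C \<cdot> q2 Y (X \<otimes> C)"
      unfolding gr_def using q2h' h'_ty D_ty
      by (simp del: assoc add: assoc[symmetric])
    have G_eq: "G = D \<cdot> q1 X C" unfolding G_def gr_eq using dg_const[of "D \<cdot> q1 X C" "X \<otimes> C" Y] D_ty by simp
    have P'D: "P' \<cdot> pa (idm X) D = \<sigma>"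
    proof (rule tup_ext[of N _ A])
      fix j assume j: "j < N"
      have pj: "\<pi>i j < N" "\<pi> (\<pi>i j) = j" using \<pi> j by auto
      show "np A N j \<cdot> (P' \<cdot> pa (idm X) D) = np A N j \<cdot> \<sigma>"
      proof (cases "\<pi>i j < p")
        case True
        have bj: "\<beta> j = \<pi>i j" using pj True \<pi> \<beta> by metis
        have "np A N j \<cdot> (P' \<cdot> pa (idm X) D) = np A N j \<cdot> P' \<cdot> pa (idm X) D" using j D_ty by simp
        also have "\<dots> = np A N (\<pi>i j) \<cdot> pa (idm X) D" using j \<pi> N0 unfolding P'_def by simp
        also have "\<dots> = np A p (\<pi>i j)" using D_ty True unfolding np1[OF True] by simp
        also have "\<dots> = np A N j \<cdot> \<sigma>" using j \<beta> N0 bj unfolding \<sigma>_def by simp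
        finally show ?thesis .
      next
        case False
        then obtain i where i: "\<pi>i j = p + i" "i < r" using pj Nr by (metis add_diff_inverse_nat nat_add_left_cancel_less)
        have bj: "\<beta> (\<pi> (p + i)) = \<beta> j" using pj i by simp
        have "np A N j \<cdot> (P' \<cdot> pa (idm X) D) = np A N j \<cdot> P' \<cdot> pa (idm X) D" using j D_ty by simp
        also have "\<dots> = np A N (p + i) \<cdot> pa (idm X) D" using j \<pi> N0 i unfolding P'_def by simp
        also have "\<dots> = np A r i \<cdot> D" using D_ty i unfolding np2[OF i(2)] by simp
        also have "\<dots> = np A p (\<beta> (\<pi> (p + i)))" using i Dr unfolding D_def by simp
        also have "\<dots> = np A p (\<beta> j)" by (simp only: bj)
        also have "\<dots> = np A N j \<cdot> \<sigma>" using j \<beta> N0 unfolding \<sigma>_def by simp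
        finally show ?thesis .
      qed
    qed (use N0 D_ty \<beta> in \<open>auto simp: \<sigma>_def\<close>)
    have "e = \<rho> \<cdot> h \<cdot> tm P' (idm C) \<cdot> pa (q1 X C) (pa (D \<cdot> q1 X C) (q2 X C))"
      using h G_ty D_ty unfolding e_def q1h'[symmetric] G_eq by simp
    also have "\<dots> = \<rho> \<cdot> h \<cdot> pa (P' \<cdot> pa (idm X) D \<cdot> q1 X C) (q2 X C)"
      using h D_ty by simp
    also have "\<dots> = \<rho> \<cdot> h \<cdot> tm \<sigma> (idm C)"
      using P'D by (simp add: tm_def')
    finally show ?thesis .
  qed
  show ?thesis using lhs e_eq unfolding \<rho>_def \<sigma>_def by simp
qed


lemma bekgen:
  assumes p0: "0 < p" "p \<le> N"
  and \<alpha>: "inj_on \<alpha> {..<p}" "\<forall>i<p. \<alpha> i < N"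
  and \<beta>: "\<forall>i<p. \<beta> (\<alpha> i) = i" "\<forall>j<N. \<beta> j < p"
  and h: "dm h = cpw A N \<otimes> C" "cd h = cpw A N"
  and hyp: "(bm A N \<alpha> p \<cdot> h = bm A N \<alpha> p \<cdot> h \<cdot> tm (bm A p \<beta> N \<cdot> bm A N \<alpha> p) (idm C)) \<or>
            (\<forall>j<N. j \<notin> \<alpha> ` {..<p} \<longrightarrow> np A N j \<cdot> h = np A N (\<alpha> (\<beta> j)) \<cdot> q1 (cpw A N) C)"
  shows "bm A N \<alpha> p \<cdot> dg (cpw A N) C h = dg (cpw A p) C (bm A N \<alpha> p \<cdot> h \<cdot> tm (bm A p \<beta> N) (idm C))"
proof (cases "p = N")
  case False
  then have pN: "p < N" using p0 by simp
  obtain \<pi> \<pi>i where "\<forall>i<N. \<pi> i < N" "\<forall>i<p. \<pi> i = \<alpha> i" "\<forall>j<N. \<pi>i j < N \<and> \<pi> (\<pi>i j) = j" "\<forall>i<N. \<pi>i (\<pi> i) = i"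
    using perm_ext[OF \<alpha>(1) \<alpha>(2) p0(2)] by blast
  then show ?thesis using bekgen_perm[OF p0(1) pN _ _ _ _ \<beta> h hyp] by blast
next
  case True
  have im: "\<alpha> ` {..<p} = {..<p}" using \<alpha> True by (intro endo_inj_surj) auto
  have ab: "\<forall>j<N. \<alpha> (\<beta> j) = j"
  proof (intro allI impI)
    fix j assume "j < N"
    then obtain i where "i < p" "j = \<alpha> i" using im True by (metis imageE lessThan_iff)
    then show "\<alpha> (\<beta> j) = j" using \<beta> by simp
  qed
  have sr: "bm A p \<beta> N \<cdot> bm A N \<alpha> p = idm (cpw A N)"
    using \<alpha> \<beta> p0 True bm_id[of N A] ab by (subst bm_bm) (auto cong: bm_cong)
  show ?thesis
    using DI[of h "cpw A N" C "bm A N \<alpha> p" "cpw A p" "bm A p \<beta> N"] h sr \<alpha> \<beta> p0 True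
    by (simp add: tm_id)
qed

end

definition rng :: "nat \<Rightarrow> nat \<Rightarrow> (nat \<Rightarrow> nat \<Rightarrow> nat) \<Rightarrow> bool" where
  "rng n m \<delta> \<longleftrightarrow> (\<forall>i<n. \<forall>j<m. \<delta> i j < n)"

context conway begin

definition FQ where "FQ n m \<delta> A C f = tup n (\<lambda>i. f \<cdot> tm (bm A n (\<delta> i) m) (idm C))"

lemma fQ_eq: "fQ S n m \<delta> A C f = FQ n m \<delta> A C f"
  by (simp add: fQ_def FQ_def rho_def tup_def bm_def)

lemma Gamma_iff: "Gamma S n m \<delta> \<longleftrightarrow> (\<forall>A C f. dm f = cpw A m \<otimes> C \<and> cd f = A \<longrightarrow>
   dg (cpw A n) C (FQ n m \<delta> A C f) = dgl A n \<cdot> dg A C (f \<cdot> tm (dgl A m) (idm C)))"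
  by (simp add: Gamma_def fQ_eq hom_def)

lemma FQ_ty[simp]: "0 < n \<Longrightarrow> 0 < m \<Longrightarrow> rng n m \<delta> \<Longrightarrow> dm f = cpw A m \<otimes> C \<Longrightarrow> cd f = A \<Longrightarrow> dm (FQ n m \<delta> A C f) = cpw A n \<otimes> C"
  "0 < n \<Longrightarrow> 0 < m \<Longrightarrow> rng n m \<delta> \<Longrightarrow> dm f = cpw A m \<otimes> C \<Longrightarrow> cd f = A \<Longrightarrow> cd (FQ n m \<delta> A C f) = cpw A n"
  by (simp_all add: FQ_def rng_def)

lemma proj_FQ[simp]: "i < n \<Longrightarrow> 0 < m \<Longrightarrow> rng n m \<delta> \<Longrightarrow> dm f = cpw A m \<otimes> C \<Longrightarrow> cd f = A \<Longrightarrow>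
   np A n i \<cdot> FQ n m \<delta> A C f = f \<cdot> tm (bm A n (\<delta> i) m) (idm C)"
  unfolding FQ_def by (subst proj_tup) (auto simp: rng_def)

lemma FQ_cong: "(\<And>i j. i < n \<Longrightarrow> j < m \<Longrightarrow> \<delta> i j = \<delta>' i j) \<Longrightarrow> FQ n m \<delta> A C f = FQ n m \<delta>' A C f"
  unfolding FQ_def by (rule tup_cong, rule arg_cong[where f="\<lambda>x. f \<cdot> tm x (idm C)"], rule bm_cong) auto

lemma Gamma_cong: assumes "\<And>i j. i < n \<Longrightarrow> j < m \<Longrightarrow> \<delta> i j = \<delta>' i j" shows "Gamma S n m \<delta> = Gamma S n m \<delta>'"
proof -
  have "\<And>A C f. FQ n m \<delta> A C f = FQ n m \<delta>' A C f" by (rule FQ_cong) (rule assms, assumption+)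
  then show ?thesis unfolding Gamma_iff by simp
qed

lemma q1_tm[simp]: "q1 (cd f) (cd g) \<cdot> tm f g = f \<cdot> q1 (dm f) (dm g)"
  by (simp add: tm_def')
lemma q2_tm[simp]: "q2 (cd f) (cd g) \<cdot> tm f g = g \<cdot> q2 (dm f) (dm g)"
  by (simp add: tm_def')

section \<open>T1: letter maps\<close>

lemma T1:
  assumes G: "Gamma S N r \<tau>" and N0: "0 < N" and r0': "0 < r'" and lam: "\<forall>j<r'. lm j < r"
  and R: "rng N r \<tau>" and eq: "\<forall>i<N. \<forall>j<r'. \<tau>' i j = \<tau> i (lm j)"
  shows "Gamma S N r' \<tau>'"
  unfolding Gamma_iff
proof (intro allI impI, elim conjE)
  fix A C f assume f: "dm f = cpw A r' \<otimes> C" "cd f = A"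
  have r0: "0 < r" using lam r0' by auto
  define f' where "f' = f \<cdot> tm (bm A r lm r') (idm C)"
  have f'_ty: "dm f' = cpw A r \<otimes> C" "cd f' = A" using f lam r0' by (simp_all add: f'_def)
  have 1: "FQ N r \<tau> A C f' = FQ N r' \<tau>' A C f"
    unfolding FQ_def
  proof (rule tup_cong)
    fix i assume i: "i < N"
    have "bm A r lm r' \<cdot> bm A N (\<tau> i) r = bm A N (\<lambda>j. \<tau> i (lm j)) r'"
      using lam R i r0 r0' by (subst bm_bm) (auto simp: rng_def)
    also have "\<dots> = bm A N (\<tau>' i) r'" using eq i by (intro bm_cong) auto
    finally have b: "bm A r lm r' \<cdot> bm A N (\<tau> i) r = bm A N (\<tau>' i) r'" .
    show "f' \<cdot> tm (bm A N (\<tau> i) r) (idm C) = f \<cdot> tm (bm A N (\<tau>' i) r') (idm C)"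
      using f lam R i r0 r0' b[symmetric] by (simp add: f'_def rng_def)
  qed
  have 2: "f' \<cdot> tm (dgl A r) (idm C) = f \<cdot> tm (dgl A r') (idm C)"
    using f lam r0 r0' bm_cdiag[of r' r lm A] by (simp add: f'_def)
  show "dg (cpw A N) C (FQ N r' \<tau>' A C f) = dgl A N \<cdot> dg A C (f \<cdot> tm (dgl A r') (idm C))"
    using G f'_ty unfolding Gamma_iff 1[symmetric] 2[symmetric] by blast
qed


section \<open>T4: subautomata\<close>

lemma T4:
  assumes G: "Gamma S N r \<tau>" and R: "rng N r \<tau>" and k0: "0 < k" and kN: "k \<le> N" and r0: "0 < r"
  and inj: "inj_on \<alpha> {..<k}" and \<alpha>N: "\<forall>s<k. \<alpha> s < N"
  and cl: "\<forall>s<k. \<forall>t<r. \<tau> (\<alpha> s) t = \<alpha> (\<tau>' s t)" and R': "rng k r \<tau>'"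
  shows "Gamma S k r \<tau>'"
  unfolding Gamma_iff
proof (intro allI impI, elim conjE)
  fix A C f assume f: "dm f = cpw A r \<otimes> C" "cd f = A"
  have N0: "0 < N" using k0 kN by simp
  define \<beta> where "\<beta> j = (if j \<in> \<alpha> ` {..<k} then the_inv_into {..<k} \<alpha> j else 0)" for j
  have \<beta>\<alpha>: "\<forall>i<k. \<beta> (\<alpha> i) = i" using the_inv_into_f_f[OF inj] by (auto simp: \<beta>_def)
  have \<beta>k: "\<forall>j<N. \<beta> j < k" using the_inv_into_into[OF inj] k0 by (auto simp: \<beta>_def)
  define h where "h = FQ N r \<tau> A C f"
  have h_ty: "dm h = cpw A N \<otimes> C" "cd h = cpw A N" using f N0 r0 R by (simp_all add: h_def)
  have bt: "\<And>s. s < k \<Longrightarrow> bm A N (\<tau> (\<alpha> s)) r \<cdot> bm A k \<beta> N = bm A k (\<tau>' s) r"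
  proof -
    fix s assume s: "s < k"
    have "bm A N (\<tau> (\<alpha> s)) r \<cdot> bm A k \<beta> N = bm A k (\<lambda>t. \<beta> (\<tau> (\<alpha> s) t)) r"
      using s R \<alpha>N \<beta>k r0 N0 by (subst bm_bm) (auto simp: rng_def)
    also have "\<dots> = bm A k (\<tau>' s) r" using s cl \<beta>\<alpha> R' by (intro bm_cong) (auto simp: rng_def)
    finally show "bm A N (\<tau> (\<alpha> s)) r \<cdot> bm A k \<beta> N = bm A k (\<tau>' s) r" .
  qed
  have sub: "bm A N \<alpha> k \<cdot> h = bm A N \<alpha> k \<cdot> h \<cdot> tm (bm A k \<beta> N \<cdot> bm A N \<alpha> k) (idm C)"
  proof (rule tup_ext[of k _ A])
    fix s assume s: "s < k"
    have b2: "bm A k (\<tau>' s) r \<cdot> bm A N \<alpha> k = bm A N (\<tau> (\<alpha> s)) r"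
    proof -
      have "bm A k (\<tau>' s) r \<cdot> bm A N \<alpha> k = bm A N (\<lambda>t. \<alpha> (\<tau>' s t)) r"
        using s R' \<alpha>N r0 k0 by (subst bm_bm) (auto simp: rng_def)
      also have "\<dots> = bm A N (\<tau> (\<alpha> s)) r" using s cl by (intro bm_cong) auto
      finally show ?thesis .
    qed
    have "np A k s \<cdot> (bm A N \<alpha> k \<cdot> h \<cdot> tm (bm A k \<beta> N \<cdot> bm A N \<alpha> k) (idm C))
        = f \<cdot> tm (bm A N (\<tau> (\<alpha> s)) r \<cdot> bm A k \<beta> N \<cdot> bm A N \<alpha> k) (idm C)"
      using s \<alpha>N \<beta>k h_ty f R r0 N0 k0 unfolding h_def by (simp add: rng_def)
    also have "\<dots> = f \<cdot> tm (bm A N (\<tau> (\<alpha> s)) r) (idm C)"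
      using bt[OF s] b2 by simp
    also have "\<dots> = np A k s \<cdot> (bm A N \<alpha> k \<cdot> h)"
      using s \<alpha>N h_ty f R r0 N0 unfolding h_def by (simp add: rng_def)
    finally show "np A k s \<cdot> (bm A N \<alpha> k \<cdot> h) = np A k s \<cdot> (bm A N \<alpha> k \<cdot> h \<cdot> tm (bm A k \<beta> N \<cdot> bm A N \<alpha> k) (idm C))" by simp
  qed (use k0 N0 \<alpha>N h_ty \<beta>k in auto)
  have B: "bm A N \<alpha> k \<cdot> dg (cpw A N) C h = dg (cpw A k) C (bm A N \<alpha> k \<cdot> h \<cdot> tm (bm A k \<beta> N) (idm C))"
    by (rule bekgen[OF k0 kN inj \<alpha>N \<beta>\<alpha> \<beta>k h_ty]) (use sub in blast)
  have e: "bm A N \<alpha> k \<cdot> h \<cdot> tm (bm A k \<beta> N) (idm C) = FQ k r \<tau>' A C f"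
  proof (rule tup_ext[of k _ A])
    fix s assume s: "s < k"
    show "np A k s \<cdot> (bm A N \<alpha> k \<cdot> h \<cdot> tm (bm A k \<beta> N) (idm C)) = np A k s \<cdot> FQ k r \<tau>' A C f"
      using s \<alpha>N \<beta>k h_ty f R R' r0 N0 k0 bt[OF s] unfolding h_def by (simp add: rng_def)
  qed (use k0 N0 \<alpha>N h_ty \<beta>k f R' r0 in auto)
  have GN: "dg (cpw A N) C h = dgl A N \<cdot> dg A C (f \<cdot> tm (dgl A r) (idm C))"
    using G f unfolding Gamma_iff h_def by blast
  show "dg (cpw A k) C (FQ k r \<tau>' A C f) = dgl A k \<cdot> dg A C (f \<cdot> tm (dgl A r) (idm C))"
    using B e GN f r0 N0 k0 \<alpha>N bm_cdiag[of k N \<alpha> A] by simp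
qed


section \<open>T5: adding the empty word\<close>

lemma bm_Suc: "0 < r \<Longrightarrow> bm A N \<tau> (Suc r) = pa (np A N (\<tau> 0)) (bm A N (\<lambda>j. \<tau> (Suc j)) r)"
  by (simp add: bm_def tup_Suc)

lemma cdiag_Suc: "0 < r \<Longrightarrow> dgl A (Suc r) = pa (idm A) (dgl A r)"
  by (simp add: cdiag_tup tup_Suc)

lemma T5:
  assumes G: "Gamma S N r \<tau>" and R: "rng N r \<tau>" and N0: "0 < N" and r0: "0 < r"
  shows "Gamma S N (Suc r) (\<lambda>i j. if j = 0 then i else \<tau> i (j - 1))"
  unfolding Gamma_iff
proof (intro allI impI, elim conjE)
  fix A C f assume f0: "dm f = cpw A (Suc r) \<otimes> C" "cd f = A"
  define \<tau>2 where "\<tau>2 = (\<lambda>i j. if j = 0 then i else \<tau> i (j - 1))"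
  define W where "W = cpw A N"
  define R' where "R' = cpw A r"
  have f: "dm f = A \<otimes> (R' \<otimes> C)" "cd f = A" using f0 r0 by (simp_all add: cpw_Suc R'_def)
  have R2: "rng N (Suc r) \<tau>2" using R by (auto simp: rng_def \<tau>2_def less_Suc_eq_0_disj)
  have bm2: "\<And>q. q < N \<Longrightarrow> bm A N (\<tau>2 q) (Suc r) = pa (np A N q) (bm A N (\<tau> q) r)"
    using r0 by (simp add: bm_Suc \<tau>2_def)
  have bty: "\<And>q. q < N \<Longrightarrow> dm (bm A N (\<tau> q) r) = W \<and> cd (bm A N (\<tau> q) r) = R'"
    using R r0 by (simp add: rng_def W_def R'_def)
  define \<Phi> where "\<Phi> = tup N (\<lambda>q. f \<cdot> pa (np A N q \<cdot> q1 W (W \<otimes> C)) (pa (bm A N (\<tau> q) r \<cdot> q1 W C \<cdot> q2 W (W \<otimes> C)) (q2 W C \<cdot> q2 W (W \<otimes> C))))"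
  have \<Phi>_ty: "dm \<Phi> = W \<otimes> (W \<otimes> C)" "cd \<Phi> = W"
    using N0 f bty by (simp_all add: \<Phi>_def W_def)
  have a: "\<Phi> \<cdot> tm (pa (idm W) (idm W)) (idm C) = FQ N (Suc r) \<tau>2 A C f"
    unfolding \<Phi>_def FQ_def
  proof (subst tup_cm)
    show "tup N (\<lambda>i. f \<cdot> pa (np A N i \<cdot> q1 W (W \<otimes> C)) (pa (bm A N (\<tau> i) r \<cdot> q1 W C \<cdot> q2 W (W \<otimes> C)) (q2 W C \<cdot> q2 W (W \<otimes> C))) \<cdot> tm (pa (idm W) (idm W)) (idm C)) =
      tup N (\<lambda>i. f \<cdot> tm (bm A N (\<tau>2 i) (Suc r)) (idm C))"
    proof (rule tup_cong)
      fix q assume q: "q < N"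
      show "f \<cdot> pa (np A N q \<cdot> q1 W (W \<otimes> C)) (pa (bm A N (\<tau> q) r \<cdot> q1 W C \<cdot> q2 W (W \<otimes> C)) (q2 W C \<cdot> q2 W (W \<otimes> C))) \<cdot> tm (pa (idm W) (idm W)) (idm C) =
        f \<cdot> tm (bm A N (\<tau>2 q) (Suc r)) (idm C)"
        using q f bty[OF q] by (simp add: bm2 tm_def' W_def pa_q)
    qed
  qed (use N0 f bty in \<open>auto simp: W_def\<close>)
  have b: "dg W C (FQ N (Suc r) \<tau>2 A C f) = dg W C (dg W (W \<otimes> C) \<Phi>)"
    using ax_dd[of \<Phi> W C] \<Phi>_ty a by simp
  define fd where "fd = dg A (R' \<otimes> C) f"
  have fd_ty: "dm fd = cpw A r \<otimes> C" "cd fd = A" using f by (simp_all add: fd_def R'_def)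
  have c: "dg W (W \<otimes> C) \<Phi> = FQ N r \<tau> A C fd"
  proof (rule tup_ext[of N _ A])
    fix q assume q: "q < N"
    have b1: "bm A N (\<lambda>_. q) (Suc 0) = np A N q" by (simp add: bm_def)
    have b2: "bm A (Suc 0) (\<lambda>_. 0) N = dgl A N" by (simp add: bm_def cdiag_tup)
    have ph: "np A N q \<cdot> \<Phi> = f \<cdot> pa (np A N q \<cdot> q1 W (W \<otimes> C)) (pa (bm A N (\<tau> q) r \<cdot> q1 W C \<cdot> q2 W (W \<otimes> C)) (q2 W C \<cdot> q2 W (W \<otimes> C)))"
      unfolding \<Phi>_def using q f bty by (subst proj_tup) (auto simp: W_def)
    have sub: "np A N q \<cdot> \<Phi> = np A N q \<cdot> \<Phi> \<cdot> tm (dgl A N \<cdot> np A N q) (idm (W \<otimes> C))"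
      using q f bty[OF q] \<Phi>_ty N0 unfolding ph by (simp add: tm_def' W_def)
    have BG0: "bm A N (\<lambda>_. q) (Suc 0) \<cdot> dg (cpw A N) (W \<otimes> C) \<Phi> = dg (cpw A (Suc 0)) (W \<otimes> C) (bm A N (\<lambda>_. q) (Suc 0) \<cdot> \<Phi> \<cdot> tm (bm A (Suc 0) (\<lambda>_. 0) N) (idm (W \<otimes> C)))"
    proof (rule bekgen)
      show "bm A N (\<lambda>_. q) (Suc 0) \<cdot> \<Phi> = bm A N (\<lambda>_. q) (Suc 0) \<cdot> \<Phi> \<cdot> tm (bm A (Suc 0) (\<lambda>_. 0) N \<cdot> bm A N (\<lambda>_. q) (Suc 0)) (idm (W \<otimes> C)) \<or>
        (\<forall>j<N. j \<notin> (\<lambda>_. q) ` {..<Suc 0} \<longrightarrow> np A N j \<cdot> \<Phi> = np A N ((\<lambda>_. q) ((\<lambda>_. 0) j)) \<cdot> q1 (cpw A N) (W \<otimes> C))"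
        using sub unfolding b1 b2 by blast
    qed (use q \<Phi>_ty N0 in \<open>auto simp: W_def inj_on_def\<close>)
    have BG: "np A N q \<cdot> dg W (W \<otimes> C) \<Phi> = dg A (W \<otimes> C) (np A N q \<cdot> \<Phi> \<cdot> tm (dgl A N) (idm (W \<otimes> C)))"
      using BG0 unfolding b1 b2 by (simp add: W_def)
    have ph2: "np A N q \<cdot> \<Phi> \<cdot> tm (dgl A N) (idm (W \<otimes> C)) = f \<cdot> tm (idm A) (tm (bm A N (\<tau> q) r) (idm C))"
      using q f bty[OF q] \<Phi>_ty N0 unfolding ph by (simp add: tm_def' W_def)
    have "np A N q \<cdot> dg W (W \<otimes> C) \<Phi> = fd \<cdot> tm (bm A N (\<tau> q) r) (idm C)"
      unfolding BG ph2 fd_def using ax_param[of f A "R' \<otimes> C" "tm (bm A N (\<tau> q) r) (idm C)" "W \<otimes> C"] f bty[OF q] by simp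
    also have "\<dots> = np A N q \<cdot> FQ N r \<tau> A C fd" using q fd_ty R r0 by simp
    finally show "np A N q \<cdot> dg W (W \<otimes> C) \<Phi> = np A N q \<cdot> FQ N r \<tau> A C fd" .
  qed (use N0 \<Phi>_ty fd_ty R r0 in \<open>auto simp: W_def\<close>)
  have d: "dg W C (FQ N r \<tau> A C fd) = dgl A N \<cdot> dg A C (fd \<cdot> tm (dgl A r) (idm C))"
    using G fd_ty unfolding Gamma_iff W_def by blast
  have e1: "fd \<cdot> tm (dgl A r) (idm C) = dg A (A \<otimes> C) (f \<cdot> tm (idm A) (tm (dgl A r) (idm C)))"
    unfolding fd_def using ax_param[of f A "R' \<otimes> C" "tm (dgl A r) (idm C)" "A \<otimes> C"] f r0 by (simp add: R'_def)
  have e2: "dg A C (dg A (A \<otimes> C) (f \<cdot> tm (idm A) (tm (dgl A r) (idm C)))) = dg A C (f \<cdot> tm (dgl A (Suc r)) (idm C))"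
  proof -
    have "f \<cdot> tm (idm A) (tm (dgl A r) (idm C)) \<cdot> tm (pa (idm A) (idm A)) (idm C) = f \<cdot> tm (dgl A (Suc r)) (idm C)"
      using f r0 by (simp add: tm_def' cdiag_Suc R'_def)
    then show ?thesis using ax_dd[of "f \<cdot> tm (idm A) (tm (dgl A r) (idm C))" A C] f r0 by (simp add: R'_def)
  qed
  show "dg (cpw A N) C (FQ N (Suc r) (\<lambda>i j. if j = 0 then i else \<tau> i (j - 1)) A C f) = dgl A N \<cdot> dg A C (f \<cdot> tm (dgl A (Suc r)) (idm C))"
    using b c d e1 e2 unfolding \<tau>2_def[symmetric] W_def by simp
qed

end

context conway begin

lemma np_mult': "I < n * p \<Longrightarrow> np A (n * p) I = np A p (I mod p) \<cdot> np (cpw A p) n (I div p)"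
proof -
  assume I: "I < n * p"
  then have p0: "0 < p" by (cases p) auto
  have "I div p < n" using I by (simp add: div_less_iff_less_mult p0)
  moreover have "I mod p < p" using p0 by simp
  ultimately show ?thesis using np_mult[of "I div p" n "I mod p" p A] by simp
qed

lemma proj_FQ'[simp]: "i < n \<Longrightarrow> 0 < m \<Longrightarrow> rng n m \<delta> \<Longrightarrow> dm f = cpw A m \<otimes> C \<Longrightarrow> cd f = A \<Longrightarrow> dm h = A \<Longrightarrow>
   h \<cdot> np A n i \<cdot> FQ n m \<delta> A C f = h \<cdot> f \<cdot> tm (bm A n (\<delta> i) m) (idm C)"
proof -
  assume a: "i < n" "0 < m" "rng n m \<delta>" "dm f = cpw A m \<otimes> C" "cd f = A" "dm h = A"
  then have n0: "0 < n" by simp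
  show ?thesis using a n0 by (subst assoc[symmetric]) (simp_all add: rng_def)
qed

lemma idx_lt: "a < m \<Longrightarrow> j < (p::nat) \<Longrightarrow> a * p + j < m * p"
proof -
  assume "a < m" "j < p"
  then have "a * p + p \<le> m * p" by (metis add.commute mult_Suc less_eq_Suc_le mult_le_mono1)
  then show ?thesis using \<open>j < p\<close> by linarith
qed

lemma T2:
  assumes G1: "Gamma S n m \<delta>" and G2: "Gamma S p m \<epsilon>" and R1: "rng n m \<delta>" and R2: "rng p m \<epsilon>"
  and n0: "0 < n" and p0: "0 < p" and m0: "0 < m"
  shows "Gamma S (n * p) m (\<lambda>I a. \<delta> (I div p) a * p + \<epsilon> (I mod p) a)"
  unfolding Gamma_iff
proof (intro allI impI, elim conjE)
  fix A C f assume f: "dm f = cpw A m \<otimes> C" "cd f = A"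
  define B where "B = cpw A p"
  have cm[simp]: "cpw B m = cpw A (m * p)" "cpw B n = cpw A (n * p)" using cpw_mult n0 m0 p0 by (simp_all add: B_def)
  have cB[simp]: "cpw A p = B" by (simp add: B_def)
  define \<delta>P where "\<delta>P = (\<lambda>I a. \<delta> (I div p) a * p + \<epsilon> (I mod p) a)"
  have RP: "rng (n * p) m \<delta>P"
    unfolding rng_def \<delta>P_def
  proof (intro allI impI)
    fix I a assume I: "I < n * p" and a: "a < m"
    have "I div p < n" using I p0 by (simp add: div_less_iff_less_mult)
    then have "\<delta> (I div p) a < n" using R1 a by (simp add: rng_def)
    moreover have "\<epsilon> (I mod p) a < p" using R2 a p0 by (simp add: rng_def)
    ultimately show "\<delta> (I div p) a * p + \<epsilon> (I mod p) a < n * p" by (rule idx_lt)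
  qed
  define F where "F = tup p (\<lambda>j. f \<cdot> tm (bm A (m * p) (\<lambda>a. a * p + \<epsilon> j a) m) (idm C))"
  have ix: "\<And>j a. j < p \<Longrightarrow> a < m \<Longrightarrow> a * p + \<epsilon> j a < m * p"
    using R2 by (intro idx_lt) (auto simp: rng_def)
  have F_ty: "dm F = cpw B m \<otimes> C" "cd F = B" using f ix p0 m0 by (simp_all add: F_def)
  have key: "\<And>i j. i < n \<Longrightarrow> j < p \<Longrightarrow>
      bm A (m * p) (\<lambda>a. a * p + \<epsilon> j a) m \<cdot> bm B n (\<delta> i) m = bm A (n * p) (\<lambda>a. \<delta> i a * p + \<epsilon> j a) m"
  proof -
    fix i j assume i: "i < n" and j: "j < p"
    have ra: "\<And>a. a < m \<Longrightarrow> \<delta> i a < n" using R1 i by (simp add: rng_def)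
    have re: "\<And>a. a < m \<Longrightarrow> \<epsilon> j a < p" using R2 j by (simp add: rng_def)
    show "bm A (m * p) (\<lambda>a. a * p + \<epsilon> j a) m \<cdot> bm B n (\<delta> i) m = bm A (n * p) (\<lambda>a. \<delta> i a * p + \<epsilon> j a) m"
    proof (rule tup_ext[of m _ A])
      fix a assume a: "a < m"
      have "np A m a \<cdot> (bm A (m * p) (\<lambda>a. a * p + \<epsilon> j a) m \<cdot> bm B n (\<delta> i) m) = np A (m * p) (a * p + \<epsilon> j a) \<cdot> bm B n (\<delta> i) m"
        using a ix j ra m0 by simp
      also have "\<dots> = np A p (\<epsilon> j a) \<cdot> np B m a \<cdot> bm B n (\<delta> i) m"
        using np_mult[OF a re[OF a], of A] a re ra m0 by simp
      also have "\<dots> = np A p (\<epsilon> j a) \<cdot> np B n (\<delta> i a)" using a re ra m0 by simp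
      also have "\<dots> = np A (n * p) (\<delta> i a * p + \<epsilon> j a)"
        using np_mult[OF ra[OF a] re[OF a], of A] by simp
      also have "\<dots> = np A m a \<cdot> bm A (n * p) (\<lambda>a. \<delta> i a * p + \<epsilon> j a) m"
        using a ra re m0 idx_lt by simp
      finally show "np A m a \<cdot> (bm A (m * p) (\<lambda>a. a * p + \<epsilon> j a) m \<cdot> bm B n (\<delta> i) m) = np A m a \<cdot> bm A (n * p) (\<lambda>a. \<delta> i a * p + \<epsilon> j a) m" .
    qed (use m0 ra re ix j idx_lt in auto)
  qed
  have 1: "FQ n m \<delta> B C F = FQ (n * p) m \<delta>P A C f"
  proof (rule tup_ext[of "n * p" _ A])
    fix I assume I: "I < n * p"
    define i where "i = I div p"
    define j where "j = I mod p"
    have i: "i < n" using I p0 by (simp add: i_def div_less_iff_less_mult)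
    have j: "j < p" using p0 by (simp add: j_def)
    have "np A (n * p) I \<cdot> FQ n m \<delta> B C F = np A p j \<cdot> np B n i \<cdot> FQ n m \<delta> B C F"
      using np_mult'[OF I, of A] i R1 F_ty m0 by (simp add: i_def j_def)
    also have "\<dots> = np A p j \<cdot> F \<cdot> tm (bm B n (\<delta> i) m) (idm C)"
      using i j R1 F_ty m0 by simp
    also have "\<dots> = f \<cdot> tm (bm A (m * p) (\<lambda>a. a * p + \<epsilon> j a) m \<cdot> bm B n (\<delta> i) m) (idm C)"
      using i j R1 f m0 ix unfolding F_def by (simp add: rng_def)
    also have "\<dots> = f \<cdot> tm (bm A (n * p) (\<delta>P I) m) (idm C)"
      using key[OF i j] by (simp add: \<delta>P_def i_def j_def)
    also have "\<dots> = np A (n * p) I \<cdot> FQ (n * p) m \<delta>P A C f"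
      using I RP f m0 by simp
    finally show "np A (n * p) I \<cdot> FQ n m \<delta> B C F = np A (n * p) I \<cdot> FQ (n * p) m \<delta>P A C f" .
  qed (use n0 p0 m0 R1 F_ty RP f in auto)
  have 2: "dg (cpw B n) C (FQ n m \<delta> B C F) = dgl B n \<cdot> dg B C (F \<cdot> tm (dgl B m) (idm C))"
    using G1 F_ty unfolding Gamma_iff by blast
  have 3: "F \<cdot> tm (dgl B m) (idm C) = FQ p m \<epsilon> A C f"
    unfolding F_def FQ_def
  proof (subst tup_cm)
    show "tup p (\<lambda>i. f \<cdot> tm (bm A (m * p) (\<lambda>a. a * p + \<epsilon> i a) m) (idm C) \<cdot> tm (dgl B m) (idm C)) = tup p (\<lambda>i. f \<cdot> tm (bm A p (\<epsilon> i) m) (idm C))"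
    proof (rule tup_cong)
      fix j assume j: "j < p"
      have re: "\<And>a. a < m \<Longrightarrow> \<epsilon> j a < p" using R2 j by (simp add: rng_def)
      have "bm A (m * p) (\<lambda>a. a * p + \<epsilon> j a) m \<cdot> dgl B m = bm A p (\<epsilon> j) m"
      proof (rule tup_ext[of m _ A])
        fix a assume a: "a < m"
        have "np A m a \<cdot> (bm A (m * p) (\<lambda>a. a * p + \<epsilon> j a) m \<cdot> dgl B m) = np A (m * p) (a * p + \<epsilon> j a) \<cdot> dgl B m"
          using a ix j m0 by simp
        also have "\<dots> = np A p (\<epsilon> j a) \<cdot> np B m a \<cdot> dgl B m"
          using np_mult[OF a re[OF a], of A] by simp
        also have "\<dots> = np A p (\<epsilon> j a)" using a re m0 by simp
        also have "\<dots> = np A m a \<cdot> bm A p (\<epsilon> j) m" using a re by simp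
        finally show "np A m a \<cdot> (bm A (m * p) (\<lambda>a. a * p + \<epsilon> j a) m \<cdot> dgl B m) = np A m a \<cdot> bm A p (\<epsilon> j) m" .
      qed (use m0 ix j re in auto)
      then show "f \<cdot> tm (bm A (m * p) (\<lambda>a. a * p + \<epsilon> j a) m) (idm C) \<cdot> tm (dgl B m) (idm C) = f \<cdot> tm (bm A p (\<epsilon> j) m) (idm C)"
        using f m0 ix j by simp
    qed
  qed (use f m0 ix p0 in auto)
  have 4: "dg B C (FQ p m \<epsilon> A C f) = dgl A p \<cdot> dg A C (f \<cdot> tm (dgl A m) (idm C))"
    using G2 f unfolding Gamma_iff B_def by blast
  have 5: "dgl B n \<cdot> dgl A p = dgl A (n * p)"
  proof (rule tup_ext[of "n * p" _ A])
    fix I assume I: "I < n * p"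
    have i: "I div p < n" using I p0 by (simp add: div_less_iff_less_mult)
    have j: "I mod p < p" using p0 by simp
    have "np A (n * p) I \<cdot> dgl A (n * p) = idm A" using I by simp
    moreover have "np A (n * p) I \<cdot> (dgl B n \<cdot> dgl A p) = idm A"
      using np_mult'[OF I, of A] i j n0 p0 by simp
    ultimately show "np A (n * p) I \<cdot> (dgl B n \<cdot> dgl A p) = np A (n * p) I \<cdot> dgl A (n * p)" by simp
  qed (use n0 p0 in auto)
  show "dg (cpw A (n * p)) C (FQ (n * p) m (\<lambda>I a. \<delta> (I div p) a * p + \<epsilon> (I mod p) a) A C f) =
        dgl A (n * p) \<cdot> dg A C (f \<cdot> tm (dgl A m) (idm C))"
    using 1 2 3 4 5 f n0 p0 m0 unfolding \<delta>P_def[symmetric] by simp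
qed


lemma dm_lemma: "c < (R::nat) \<Longrightarrow> (x * R + c) div R = x \<and> (x * R + c) mod R = c"
  by simp

lemma dgl_dgl: "0 < n \<Longrightarrow> 0 < p \<Longrightarrow> dgl (cpw A p) n \<cdot> dgl A p = dgl A (n * p)"
proof (rule tup_ext[of "n * p" _ A])
  fix I assume n0: "0 < n" and p0: "0 < p" and I: "I < n * p"
  have i: "I div p < n" using I p0 by (simp add: div_less_iff_less_mult)
  have j: "I mod p < p" using p0 by simp
  have "np A (n * p) I \<cdot> dgl A (n * p) = idm A" using I by simp
  moreover have "np A (n * p) I \<cdot> (dgl (cpw A p) n \<cdot> dgl A p) = idm A"
    using np_mult'[OF I, of A] i j n0 p0 cpw_mult[OF n0 p0, of A] by simp
  ultimately show "np A (n * p) I \<cdot> (dgl (cpw A p) n \<cdot> dgl A p) = np A (n * p) I \<cdot> dgl A (n * p)" by simp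
qed (auto simp: cpw_mult)

lemma T3:
  assumes G: "Gamma S n (m1 + m2) \<delta>" and R: "rng n (m1 + m2) \<delta>" and n0: "0 < n" and m10: "0 < m1" and m20: "0 < m2"
  shows "Gamma S n (m1 + m1 * m2) (\<lambda>i j. if j < m1 then \<delta> i j else \<delta> (\<delta> i ((j - m1) div m2)) (m1 + (j - m1) mod m2))"
  unfolding Gamma_iff
proof (intro allI impI, elim conjE)
  fix A C f
  define k where "k = m1 + m1 * m2"
  assume f: "dm f = cpw A (m1 + m1 * m2) \<otimes> C" "cd f = A"
  then have fk: "dm f = cpw A k \<otimes> C" by (simp add: k_def)
  define \<delta>' where "\<delta>' = (\<lambda>i j. if j < m1 then \<delta> i j else \<delta> (\<delta> i ((j - m1) div m2)) (m1 + (j - m1) mod m2))"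
  define Rr where "Rr = Suc m2"
  define M where "M = m1 + m2"
  define B where "B = cpw A Rr"
  have k0: "0 < k" and M0: "0 < M" and R0: "0 < Rr" using m10 by (simp_all add: k_def M_def Rr_def)
  have cm[simp]: "cpw B M = cpw A (M * Rr)" "cpw B n = cpw A (n * Rr)" using cpw_mult n0 M0 R0 by (simp_all add: B_def)
  have cB[simp]: "cpw A Rr = B" by (simp add: B_def)
  define \<mu>d where "\<mu>d a = (if a < m1 then a else (a - m1) div m2)" for a
  define \<mu>m where "\<mu>m a = (if a < m1 then 0 else Suc ((a - m1) mod m2))" for a
  have \<mu>d_lt: "\<And>a. a < k \<Longrightarrow> \<mu>d a < M"
  proof -
    fix a assume a: "a < k"
    show "\<mu>d a < M"
    proof (cases "a < m1")
      case False
      then have "a - m1 < m1 * m2" using a by (simp add: k_def)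
      then have "(a - m1) div m2 < m1" using m20 by (simp add: div_less_iff_less_mult mult.commute)
      then show ?thesis using False by (simp add: \<mu>d_def M_def)
    qed (simp add: \<mu>d_def M_def)
  qed
  have \<mu>m_lt: "\<And>a. \<mu>m a < Rr" using m20 by (simp add: \<mu>m_def Rr_def)
  define \<mu> where "\<mu> a = \<mu>d a * Rr + \<mu>m a" for a
  have \<mu>_lt: "\<And>a. a < k \<Longrightarrow> \<mu> a < M * Rr" using \<mu>d_lt \<mu>m_lt idx_lt by (simp add: \<mu>_def)
  have np\<mu>: "\<And>a. a < k \<Longrightarrow> np A (M * Rr) (\<mu> a) = np A Rr (\<mu>m a) \<cdot> np B M (\<mu>d a)"
  proof -
    fix a assume a: "a < k"
    show "np A (M * Rr) (\<mu> a) = np A Rr (\<mu>m a) \<cdot> np B M (\<mu>d a)"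
      using np_mult[OF \<mu>d_lt[OF a] \<mu>m_lt, of A] unfolding \<mu>_def by simp
  qed
  have rM: "\<And>c. 0 < c \<Longrightarrow> c < Rr \<Longrightarrow> m1 + c - 1 < M" by (simp add: M_def Rr_def)
  have npc: "\<And>c. 0 < c \<Longrightarrow> c < Rr \<Longrightarrow> np A (M * Rr) ((m1 + c - 1) * Rr) = np A Rr 0 \<cdot> np B M (m1 + c - 1)"
  proof -
    fix c assume c: "0 < c" "c < Rr"
    show "np A (M * Rr) ((m1 + c - 1) * Rr) = np A Rr 0 \<cdot> np B M (m1 + c - 1)"
      using np_mult[OF rM[OF c] R0, of A] by simp
  qed
  define F where "F = tup Rr (\<lambda>c. if c = 0 then f \<cdot> tm (bm A (M * Rr) \<mu> k) (idm C) else np A (M * Rr) ((m1 + c - 1) * Rr) \<cdot> q1 (cpw A (M * Rr)) C)"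
  have rMR: "\<And>c. 0 < c \<Longrightarrow> c < Rr \<Longrightarrow> (m1 + c - 1) * Rr < M * Rr" using rM R0 by simp
  have Ff_ty: "\<And>c. c < Rr \<Longrightarrow> dm (if c = 0 then f \<cdot> tm (bm A (M * Rr) \<mu> k) (idm C) else np A (M * Rr) ((m1 + c - 1) * Rr) \<cdot> q1 (cpw A (M * Rr)) C) = cpw A (M * Rr) \<otimes> C \<and>
     cd (if c = 0 then f \<cdot> tm (bm A (M * Rr) \<mu> k) (idm C) else np A (M * Rr) ((m1 + c - 1) * Rr) \<cdot> q1 (cpw A (M * Rr)) C) = A"
    using fk f(2) k0 \<mu>_lt rMR by auto
  have F_ty: "dm F = cpw A (M * Rr) \<otimes> C" "cd F = B"
  proof -
    show "dm F = cpw A (M * Rr) \<otimes> C" unfolding F_def by (rule tup_ty[OF R0]) (use Ff_ty in blast)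
    have "cd F = cpw A Rr" unfolding F_def by (rule tup_cd[OF R0]) (use Ff_ty in blast)+
    then show "cd F = B" by simp
  qed
  have F0: "np A Rr 0 \<cdot> F = f \<cdot> tm (bm A (M * Rr) \<mu> k) (idm C)"
    unfolding F_def using f k0 \<mu>_lt rMR R0 by (subst proj_tup) (auto simp: k_def)
  have Fc: "\<And>c. 0 < c \<Longrightarrow> c < Rr \<Longrightarrow> np A Rr c \<cdot> F = np A (M * Rr) ((m1 + c - 1) * Rr) \<cdot> q1 (cpw A (M * Rr)) C"
    unfolding F_def using f k0 \<mu>_lt rMR R0 by (subst proj_tup) (auto simp: k_def)
  define H where "H = FQ n M \<delta> B C F"
  have RM: "rng n M \<delta>" using R by (simp add: M_def)
  have H_ty: "dm H = cpw A (n * Rr) \<otimes> C" "cd H = cpw A (n * Rr)" using F_ty RM n0 M0 by (simp_all add: H_def)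
  define K where "K = F \<cdot> tm (dgl B M) (idm C)"
  have K_ty: "dm K = B \<otimes> C" "cd K = B" using F_ty M0 by (simp_all add: K_def)
  have GH: "dg (cpw A (n * Rr)) C H = dgl B n \<cdot> dg B C K"
    using G F_ty unfolding Gamma_iff H_def K_def M_def[symmetric] by (metis cm)
  define k0' where "k0' = dg A C (f \<cdot> tm (dgl A k) (idm C))"
  have K0: "np A Rr 0 \<cdot> K = f \<cdot> tm (bm A Rr \<mu>m k) (idm C)"
  proof -
    have "bm A (M * Rr) \<mu> k \<cdot> dgl B M = bm A Rr \<mu>m k"
    proof (rule tup_ext[of k _ A])
      fix a assume a: "a < k"
      have "np A k a \<cdot> (bm A (M * Rr) \<mu> k \<cdot> dgl B M) = np A Rr (\<mu>m a) \<cdot> np B M (\<mu>d a) \<cdot> dgl B M"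
        using a \<mu>_lt np\<mu>[OF a] M0 by simp
      also have "\<dots> = np A Rr (\<mu>m a)" using \<mu>d_lt[OF a] \<mu>m_lt by simp
      finally show "np A k a \<cdot> (bm A (M * Rr) \<mu> k \<cdot> dgl B M) = np A k a \<cdot> bm A Rr \<mu>m k"
        using a \<mu>m_lt by simp
    qed (use k0 \<mu>_lt M0 \<mu>m_lt in auto)
    note bd = this
    have "np A Rr 0 \<cdot> K = np A Rr 0 \<cdot> F \<cdot> tm (dgl B M) (idm C)"
      unfolding K_def using F_ty M0 R0 by (subst assoc) auto
    also have "\<dots> = f \<cdot> tm (bm A (M * Rr) \<mu> k) (idm C) \<cdot> tm (dgl B M) (idm C)" by (simp only: F0)
    also have "\<dots> = f \<cdot> tm (bm A Rr \<mu>m k) (idm C)" using fk k0 \<mu>_lt M0 bd by simp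
    finally show ?thesis .
  qed
  have Kc: "\<And>c. 0 < c \<Longrightarrow> c < Rr \<Longrightarrow> np A Rr c \<cdot> K = np A Rr 0 \<cdot> q1 B C"
  proof -
    fix c assume c: "0 < c" "c < Rr"
    have "np A Rr c \<cdot> K = np A (M * Rr) ((m1 + c - 1) * Rr) \<cdot> q1 (cpw A (M * Rr)) C \<cdot> tm (dgl B M) (idm C)"
      using Fc[OF c] F_ty c M0 unfolding K_def by (subst assoc) auto
    also have "\<dots> = np A Rr 0 \<cdot> np B M (m1 + c - 1) \<cdot> dgl B M \<cdot> q1 B C"
      using npc[OF c] rMR[OF c] M0 by (simp add: tm_def')
    also have "\<dots> = np A Rr 0 \<cdot> q1 B C" using rM[OF c] R0 by simp
    finally show "np A Rr c \<cdot> K = np A Rr 0 \<cdot> q1 B C" .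
  qed
  have b01: "bm A Rr (\<lambda>_. 0) (Suc 0) = np A Rr 0" by (simp add: bm_def)
  have b02: "bm A (Suc 0) (\<lambda>_. 0) Rr = dgl A Rr" by (simp add: bm_def cdiag_tup)
  have Kd0: "np A Rr 0 \<cdot> dg B C K = k0'"
  proof -
    have "bm A Rr (\<lambda>_. 0) (Suc 0) \<cdot> dg (cpw A Rr) C K = dg (cpw A (Suc 0)) C (bm A Rr (\<lambda>_. 0) (Suc 0) \<cdot> K \<cdot> tm (bm A (Suc 0) (\<lambda>_. 0) Rr) (idm C))"
    proof (rule bekgen)
      show "bm A Rr (\<lambda>_. 0) (Suc 0) \<cdot> K = bm A Rr (\<lambda>_. 0) (Suc 0) \<cdot> K \<cdot> tm (bm A (Suc 0) (\<lambda>_. 0) Rr \<cdot> bm A Rr (\<lambda>_. 0) (Suc 0)) (idm C) \<or>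
        (\<forall>j<Rr. j \<notin> (\<lambda>_. 0) ` {..<Suc 0} \<longrightarrow> np A Rr j \<cdot> K = np A Rr ((\<lambda>_. 0) ((\<lambda>_. 0) j)) \<cdot> q1 (cpw A Rr) C)"
        using Kc by auto
    qed (use R0 K_ty in \<open>auto simp: inj_on_def\<close>)
    then have "np A Rr 0 \<cdot> dg B C K = dg A C (np A Rr 0 \<cdot> K \<cdot> tm (dgl A Rr) (idm C))"
      unfolding b01 b02 by simp
    also have "\<dots> = dg A C (f \<cdot> tm (bm A Rr \<mu>m k \<cdot> dgl A Rr) (idm C))"
      using K0 K_ty R0 f k0 \<mu>m_lt by (simp add: fk)
    also have "\<dots> = k0'" unfolding k0'_def using bm_cdiag[OF k0 R0, of \<mu>m A] \<mu>m_lt by simp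
    finally show ?thesis .
  qed
  have k0'_ty: "dm k0' = C" "cd k0' = A" using f k0 by (simp_all add: k0'_def fk)
  have Kd: "dg B C K = dgl A Rr \<cdot> k0'"
  proof (rule tup_ext[of Rr _ A])
    fix c assume c: "c < Rr"
    show "np A Rr c \<cdot> dg B C K = np A Rr c \<cdot> (dgl A Rr \<cdot> k0')"
    proof (cases "c = 0")
      case True then show ?thesis using Kd0 k0'_ty R0 by simp
    next
      case False
      have "np A Rr c \<cdot> dg B C K = np A Rr c \<cdot> (K \<cdot> pa (dg B C K) (idm C))"
        using fixp[of K B C] K_ty c by simp
      also have "\<dots> = np A Rr c \<cdot> K \<cdot> pa (dg B C K) (idm C)"
        using K_ty c by (subst assoc) auto
      also have "\<dots> = np A Rr 0 \<cdot> dg B C K" using Kc[of c] False c K_ty R0 by simp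
      also have "\<dots> = np A Rr c \<cdot> (dgl A Rr \<cdot> k0')" using Kd0 c k0'_ty by simp
      finally show ?thesis .
    qed
  qed (use R0 K_ty k0'_ty in auto)
  have Hd: "dg (cpw A (n * Rr)) C H = dgl A (n * Rr) \<cdot> k0'"
    using GH Kd dgl_dgl[OF n0 R0, of A] k0'_ty n0 R0 by simp
  define \<alpha> where "\<alpha> q = q * Rr" for q
  define \<beta> where "\<beta> I = (if I mod Rr = 0 then I div Rr else \<delta> (I div Rr) (m1 + I mod Rr - 1))" for I
  have nR0: "0 < n * Rr" using n0 R0 by simp
  have \<alpha>inj: "inj_on \<alpha> {..<n}" using R0 by (auto simp: inj_on_def \<alpha>_def)
  have \<alpha>lt: "\<forall>q<n. \<alpha> q < n * Rr" using R0 by (auto simp: \<alpha>_def)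
  have \<beta>\<alpha>: "\<forall>q<n. \<beta> (\<alpha> q) = q" using R0 by (auto simp: \<alpha>_def \<beta>_def)
  have \<beta>xc: "\<And>x c. c < Rr \<Longrightarrow> \<beta> (x * Rr + c) = (if c = 0 then x else \<delta> x (m1 + c - 1))"
    by (simp add: \<beta>_def)
  have \<beta>lt: "\<forall>I<n * Rr. \<beta> I < n"
  proof (intro allI impI)
    fix I assume I: "I < n * Rr"
    have q: "I div Rr < n" using I R0 by (simp add: div_less_iff_less_mult)
    have c: "I mod Rr < Rr" using R0 by simp
    show "\<beta> I < n"
    proof (cases "I mod Rr = 0")
      case True then show ?thesis using q by (simp add: \<beta>_def)
    next
      case False
      then have "m1 + I mod Rr - 1 < m1 + m2" using c rM[of "I mod Rr"] by (simp add: M_def)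
      then show ?thesis using False q R by (simp add: \<beta>_def rng_def)
    qed
  qed
  have elim: "\<forall>I<n * Rr. I \<notin> \<alpha> ` {..<n} \<longrightarrow> np A (n * Rr) I \<cdot> H = np A (n * Rr) (\<alpha> (\<beta> I)) \<cdot> q1 (cpw A (n * Rr)) C"
  proof (intro allI impI)
    fix I assume I: "I < n * Rr" and nI: "I \<notin> \<alpha> ` {..<n}"
    define q where "q = I div Rr"
    define c where "c = I mod Rr"
    have q: "q < n" using I R0 by (simp add: div_less_iff_less_mult q_def)
    have cR: "c < Rr" using R0 by (simp add: c_def)
    have c0: "0 < c"
    proof (rule ccontr)
      assume "\<not> 0 < c"
      then have "I = \<alpha> q" using div_mult_mod_eq[of I Rr] by (simp add: c_def q_def \<alpha>_def)
      then show False using nI q by auto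
    qed
    have Iqc: "I = q * Rr + c" by (simp add: q_def c_def)
    have dq: "\<delta> q (m1 + c - 1) < n" using R q rM[OF c0 cR] by (simp add: rng_def M_def)
    have "np A (n * Rr) I \<cdot> H = np A Rr c \<cdot> np B n q \<cdot> H"
      using np_mult'[OF I, of A] by (simp add: q_def c_def)
    also have "\<dots> = np A Rr c \<cdot> F \<cdot> tm (bm B n (\<delta> q) M) (idm C)"
      unfolding H_def using q RM F_ty cR M0 by simp
    also have "\<dots> = np A (M * Rr) ((m1 + c - 1) * Rr) \<cdot> q1 (cpw A (M * Rr)) C \<cdot> tm (bm B n (\<delta> q) M) (idm C)"
      using Fc[OF c0 cR] by simp
    also have "\<dots> = np A Rr 0 \<cdot> np B M (m1 + c - 1) \<cdot> bm B n (\<delta> q) M \<cdot> q1 (cpw A (n * Rr)) C"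
      using npc[OF c0 cR] rMR[OF c0 cR] M0 q RM by (simp add: tm_def' rng_def)
    also have "\<dots> = np A Rr 0 \<cdot> np B n (\<delta> q (m1 + c - 1)) \<cdot> q1 (cpw A (n * Rr)) C"
      using rM[OF c0 cR] M0 q RM R0 by (simp add: rng_def)
    also have "\<dots> = np A (n * Rr) (\<alpha> (\<beta> I)) \<cdot> q1 (cpw A (n * Rr)) C"
      using np_mult[OF dq R0, of A] \<beta>xc[OF cR, of q] c0 unfolding Iqc by (simp add: \<alpha>_def)
    finally show "np A (n * Rr) I \<cdot> H = np A (n * Rr) (\<alpha> (\<beta> I)) \<cdot> q1 (cpw A (n * Rr)) C" .
  qed
  have BG: "bm A (n * Rr) \<alpha> n \<cdot> dg (cpw A (n * Rr)) C H = dg (cpw A n) C (bm A (n * Rr) \<alpha> n \<cdot> H \<cdot> tm (bm A n \<beta> (n * Rr)) (idm C))"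
  proof (rule bekgen[OF n0 _ \<alpha>inj \<alpha>lt \<beta>\<alpha> \<beta>lt H_ty])
    show "n \<le> n * Rr" using R0 by simp
  qed (use elim in blast)
  have lhs: "bm A (n * Rr) \<alpha> n \<cdot> dg (cpw A (n * Rr)) C H = dgl A n \<cdot> k0'"
    using Hd bm_cdiag[OF n0 nR0, of \<alpha> A] \<alpha>lt k0'_ty n0 nR0 by simp
  have Rk: "rng n k \<delta>'"
    unfolding rng_def
  proof (intro allI impI)
    fix q a assume q: "q < n" and a: "a < k"
    show "\<delta>' q a < n"
    proof (cases "a < m1")
      case True then show ?thesis using R q by (simp add: \<delta>'_def rng_def)
    next
      case False
      have "a - m1 < m1 * m2" using a False by (simp add: k_def)
      then have "(a - m1) div m2 < m1" using m20 by (simp add: div_less_iff_less_mult mult.commute)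
      then have "\<delta> q ((a - m1) div m2) < n" using R q by (simp add: rng_def)
      moreover have "m1 + (a - m1) mod m2 < m1 + m2" using m20 by simp
      ultimately show ?thesis using R False by (simp add: \<delta>'_def rng_def)
    qed
  qed
  have key: "\<And>q. q < n \<Longrightarrow> bm A (M * Rr) \<mu> k \<cdot> bm B n (\<delta> q) M \<cdot> bm A n \<beta> (n * Rr) = bm A n (\<delta>' q) k"
  proof -
    fix q assume q: "q < n"
    have dq: "\<And>j. j < M \<Longrightarrow> \<delta> q j < n" using R q by (simp add: rng_def M_def)
    show "bm A (M * Rr) \<mu> k \<cdot> bm B n (\<delta> q) M \<cdot> bm A n \<beta> (n * Rr) = bm A n (\<delta>' q) k"
    proof (rule tup_ext[of k _ A])
      fix a assume a: "a < k"
      have "np A k a \<cdot> (bm A (M * Rr) \<mu> k \<cdot> bm B n (\<delta> q) M \<cdot> bm A n \<beta> (n * Rr)) = np A (M * Rr) (\<mu> a) \<cdot> bm B n (\<delta> q) M \<cdot> bm A n \<beta> (n * Rr)"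
        using a \<mu>_lt dq M0 \<beta>lt nR0 by simp
      also have "\<dots> = np A Rr (\<mu>m a) \<cdot> np B M (\<mu>d a) \<cdot> bm B n (\<delta> q) M \<cdot> bm A n \<beta> (n * Rr)"
        by (simp only: np\<mu>[OF a])
      also have "\<dots> = np A Rr (\<mu>m a) \<cdot> np B n (\<delta> q (\<mu>d a)) \<cdot> bm A n \<beta> (n * Rr)"
        using \<mu>d_lt[OF a] dq M0 \<mu>m_lt by simp
      also have "\<dots> = np A (n * Rr) (\<delta> q (\<mu>d a) * Rr + \<mu>m a) \<cdot> bm A n \<beta> (n * Rr)"
        using np_mult[OF dq[OF \<mu>d_lt[OF a]] \<mu>m_lt, of A] by simp
      also have "\<dots> = np A n (\<beta> (\<delta> q (\<mu>d a) * Rr + \<mu>m a))"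
        using \<beta>lt nR0 idx_lt[OF dq[OF \<mu>d_lt[OF a]] \<mu>m_lt] by simp
      also have "\<dots> = np A n (\<delta>' q a)"
        using \<beta>xc[OF \<mu>m_lt] by (simp add: \<mu>m_def \<mu>d_def \<delta>'_def)
      also have "\<dots> = np A k a \<cdot> bm A n (\<delta>' q) k" using a Rk q by (simp add: rng_def)
      finally show "np A k a \<cdot> (bm A (M * Rr) \<mu> k \<cdot> bm B n (\<delta> q) M \<cdot> bm A n \<beta> (n * Rr)) = np A k a \<cdot> bm A n (\<delta>' q) k" .
    qed (use k0 \<mu>_lt dq M0 \<beta>lt nR0 Rk q in \<open>auto simp: rng_def\<close>)
  qed
  have rhs: "bm A (n * Rr) \<alpha> n \<cdot> H \<cdot> tm (bm A n \<beta> (n * Rr)) (idm C) = FQ n k \<delta>' A C f"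
  proof (rule tup_ext[of n _ A])
    fix q assume q: "q < n"
    have "np A n q \<cdot> (bm A (n * Rr) \<alpha> n \<cdot> H \<cdot> tm (bm A n \<beta> (n * Rr)) (idm C)) = np A (n * Rr) (q * Rr) \<cdot> H \<cdot> tm (bm A n \<beta> (n * Rr)) (idm C)"
      using q \<alpha>lt H_ty \<beta>lt nR0 by (simp add: \<alpha>_def)
    also have "\<dots> = np A Rr 0 \<cdot> np B n q \<cdot> H \<cdot> tm (bm A n \<beta> (n * Rr)) (idm C)"
      using np_mult[OF q R0, of A] by simp
    also have "\<dots> = np A Rr 0 \<cdot> F \<cdot> tm (bm B n (\<delta> q) M) (idm C) \<cdot> tm (bm A n \<beta> (n * Rr)) (idm C)"
      unfolding H_def using q RM F_ty R0 M0 by simp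
    also have "\<dots> = f \<cdot> tm (bm A (M * Rr) \<mu> k) (idm C) \<cdot> tm (bm B n (\<delta> q) M) (idm C) \<cdot> tm (bm A n \<beta> (n * Rr)) (idm C)"
      by (simp only: F0)
    also have "\<dots> = f \<cdot> tm (bm A n (\<delta>' q) k) (idm C)"
      using key[OF q] fk k0 \<mu>_lt RM q M0 \<beta>lt nR0 by (simp add: rng_def)
    also have "\<dots> = np A n q \<cdot> FQ n k \<delta>' A C f" using q Rk fk f k0 by simp
    finally show "np A n q \<cdot> (bm A (n * Rr) \<alpha> n \<cdot> H \<cdot> tm (bm A n \<beta> (n * Rr)) (idm C)) = np A n q \<cdot> FQ n k \<delta>' A C f" .
  qed (use n0 \<alpha>lt H_ty \<beta>lt nR0 Rk fk f k0 in auto)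
  show "dg (cpw A n) C (FQ n (m1 + m1 * m2) (\<lambda>i j. if j < m1 then \<delta> i j else \<delta> (\<delta> i ((j - m1) div m2)) (m1 + (j - m1) mod m2)) A C f) =
       dgl A n \<cdot> dg A C (f \<cdot> tm (dgl A (m1 + m1 * m2)) (idm C))"
    using BG lhs rhs unfolding \<delta>'_def[symmetric] k_def[symmetric] k0'_def by simp
qed

end

lemma idx_lt0: "a < m \<Longrightarrow> j < (p::nat) \<Longrightarrow> a * p + j < m * p"
proof -
  assume "a < m" "j < p"
  then have "a * p + p \<le> m * p" by (metis add.commute mult_Suc less_eq_Suc_le mult_le_mono1)
  then show ?thesis using \<open>j < p\<close> by linarith
qed

lemma dm0: "c < (R::nat) \<Longrightarrow> (x * R + c) div R = x \<and> (x * R + c) mod R = c"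
  by simp

fun enc :: "nat \<Rightarrow> nat list \<Rightarrow> nat" where
  "enc n [] = 0"
| "enc n (q # qs) = q * n ^ length qs + enc n qs"

lemma enc_lt: "\<forall>q\<in>set qs. q < n \<Longrightarrow> enc n qs < n ^ length qs"
proof (induction qs)
  case Nil then show ?case by simp
next
  case (Cons q qs)
  then have "enc n qs < n ^ length qs" "q < n" by auto
  then show ?case using idx_lt0[of q n "enc n qs" "n ^ length qs"] by (simp add: mult.commute)
qed

lemma enc_inj: "length xs = length ys \<Longrightarrow> \<forall>q\<in>set xs. q < n \<Longrightarrow> \<forall>q\<in>set ys. q < n \<Longrightarrow> enc n xs = enc n ys \<Longrightarrow> xs = ys"
proof (induction xs arbitrary: ys)
  case Nil then show ?case by simp
next
  case (Cons x xs)
  then obtain y ys' where ys: "ys = y # ys'" by (cases ys) auto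
  have l: "length xs = length ys'" using Cons.prems ys by simp
  have e1: "enc n xs < n ^ length xs" using Cons.prems by (intro enc_lt) auto
  have e2: "enc n ys' < n ^ length xs" using Cons.prems ys l by (intro enc_lt[of ys' n, simplified l[symmetric]]) auto
  have eq: "x * n ^ length xs + enc n xs = y * n ^ length xs + enc n ys'" using Cons.prems ys l by simp
  have "x = y" using dm0[OF e1, of x] dm0[OF e2, of y] eq by metis
  moreover have "enc n xs = enc n ys'" using dm0[OF e1, of x] dm0[OF e2, of y] eq by metis
  ultimately show ?case using Cons.IH[of ys'] Cons.prems ys l by auto
qed

fun pd :: "nat \<Rightarrow> (nat \<Rightarrow> nat \<Rightarrow> nat) \<Rightarrow> nat \<Rightarrow> nat \<Rightarrow> nat \<Rightarrow> nat" where
  "pd n \<delta> 0 = \<delta>"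
| "pd n \<delta> (Suc j) = (\<lambda>I a. \<delta> (I div n ^ Suc j) a * n ^ Suc j + pd n \<delta> j (I mod n ^ Suc j) a)"

lemma pd_enc: "length qs = Suc j \<Longrightarrow> \<forall>q\<in>set qs. q < n \<Longrightarrow> a < m \<Longrightarrow> rng n m \<delta> \<Longrightarrow>
  pd n \<delta> j (enc n qs) a = enc n (map (\<lambda>q. \<delta> q a) qs)"
proof (induction j arbitrary: qs)
  case 0 then show ?case by (cases qs) auto
next
  case (Suc j)
  then obtain q qs' where qs: "qs = q # qs'" by (cases qs) auto
  have l: "length qs' = Suc j" using Suc.prems qs by simp
  have e: "enc n qs' < n ^ Suc j" using Suc.prems qs enc_lt[of qs' n] l by auto
  have "enc n qs = q * n ^ Suc j + enc n qs'" using qs l by simp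
  then have d: "enc n qs div n ^ Suc j = q" "enc n qs mod n ^ Suc j = enc n qs'" using dm0[OF e] by auto
  show ?case using d Suc.IH[OF l] Suc.prems qs l by simp
qed

lemma pd_rng: "rng n m \<delta> \<Longrightarrow> 0 < n \<Longrightarrow> rng (n ^ Suc j) m (pd n \<delta> j)"
proof (induction j)
  case 0 then show ?case by simp
next
  case (Suc j)
  show ?case unfolding rng_def
  proof (intro allI impI)
    fix I a assume I: "I < n ^ Suc (Suc j)" and a: "a < m"
    have p0: "0 < n ^ Suc j" using Suc.prems by simp
    have "I div n ^ Suc j < n" using I p0 by (simp add: div_less_iff_less_mult mult.commute)
    then have "\<delta> (I div n ^ Suc j) a < n" using Suc.prems a by (simp add: rng_def)
    moreover have "pd n \<delta> j (I mod n ^ Suc j) a < n ^ Suc j"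
      using Suc.IH Suc.prems a p0 by (simp add: rng_def)
    ultimately have "\<delta> (I div n ^ Suc j) a * n ^ Suc j + pd n \<delta> j (I mod n ^ Suc j) a < n * n ^ Suc j"
      by (rule idx_lt0)
    then show "pd n \<delta> (Suc j) I a < n ^ Suc (Suc j)" by (simp only: pd.simps power_Suc[of n "Suc j"])
  qed
qed

lemma foldl_rng: "rng N m \<tau> \<Longrightarrow> I < N \<Longrightarrow> set w \<subseteq> {..<m} \<Longrightarrow> foldl \<tau> I w < N"
  by (induction w arbitrary: I) (auto simp: rng_def)

lemma foldl_enc: "length qs = Suc j \<Longrightarrow> \<forall>q\<in>set qs. q < n \<Longrightarrow> set w \<subseteq> {..<m} \<Longrightarrow> rng n m \<delta> \<Longrightarrow>
  foldl (pd n \<delta> j) (enc n qs) w = enc n (map (\<lambda>q. foldl \<delta> q w) qs)"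
proof (induction w arbitrary: qs)
  case Nil then show ?case by simp
next
  case (Cons a w)
  have "foldl (pd n \<delta> j) (enc n qs) (a # w) = foldl (pd n \<delta> j) (enc n (map (\<lambda>q. \<delta> q a) qs)) w"
    using pd_enc[OF Cons.prems(1) Cons.prems(2), of a m \<delta>] Cons.prems by simp
  also have "\<dots> = enc n (map (\<lambda>q. foldl \<delta> q w) (map (\<lambda>q. \<delta> q a) qs))"
    using Cons.IH[of "map (\<lambda>q. \<delta> q a) qs"] Cons.prems by (auto simp: rng_def)
  finally show ?case by (simp add: comp_def)
qed

fun cnt :: "nat \<Rightarrow> nat \<Rightarrow> nat" where
  "cnt m 0 = m"
| "cnt m (Suc L) = m + m * cnt m L"

fun wd :: "nat \<Rightarrow> nat \<Rightarrow> nat \<Rightarrow> nat list" where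
  "wd m 0 j = [j]"
| "wd m (Suc L) j = (if j < m then [j] else ((j - m) div cnt m L) # wd m L ((j - m) mod cnt m L))"

lemma cnt_ge: "m \<le> cnt m L" by (induction L) auto

lemma wd_small: "j < m \<Longrightarrow> wd m L j = [j]" by (cases L) auto

lemma wd_set: "0 < m \<Longrightarrow> j < cnt m L \<Longrightarrow> set (wd m L j) \<subseteq> {..<m}"
proof (induction L arbitrary: j)
  case 0 then show ?case by simp
next
  case (Suc L)
  show ?case
  proof (cases "j < m")
    case False
    have c0: "0 < cnt m L" using cnt_ge[of m L] Suc.prems by simp
    have "j - m < m * cnt m L" using Suc.prems False by simp
    then have "(j - m) div cnt m L < m" using c0 by (simp add: div_less_iff_less_mult)
    then show ?thesis using Suc.IH[of "(j - m) mod cnt m L"] c0 Suc.prems False by simp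
  qed simp
qed

lemma wd_surj: "w \<noteq> [] \<Longrightarrow> set w \<subseteq> {..<m} \<Longrightarrow> length w \<le> Suc L \<Longrightarrow> \<exists>j<cnt m L. wd m L j = w"
proof (induction L arbitrary: w)
  case 0
  then obtain a where "w = [a]" by (cases w) auto
  then show ?case using 0 by auto
next
  case (Suc L)
  then obtain a w' where w: "w = a # w'" by (cases w) auto
  show ?case
  proof (cases "w' = []")
    case True then show ?thesis using w Suc.prems cnt_ge[of m "Suc L"] by (intro exI[of _ a]) (auto simp: wd_small)
  next
    case False
    obtain j' where j': "j' < cnt m L" "wd m L j' = w'" using Suc.IH[OF False] Suc.prems w by auto
    have a: "a < m" using Suc.prems w by simp
    define j where "j = m + (a * cnt m L + j')"
    have lt: "a * cnt m L + j' < m * cnt m L" using idx_lt0[OF a j'(1)] .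
    have "(j - m) div cnt m L = a" "(j - m) mod cnt m L = j'" using dm0[OF j'(1)] by (auto simp: j_def)
    then have "wd m (Suc L) j = w" using w j' by (simp add: j_def)
    moreover have "j < cnt m (Suc L)" using lt by (simp add: j_def)
    ultimately show ?thesis by blast
  qed
qed

context conway begin

lemma G_pow: "Gamma S n m \<delta> \<Longrightarrow> rng n m \<delta> \<Longrightarrow> 0 < n \<Longrightarrow> 0 < m \<Longrightarrow> Gamma S (n ^ Suc j) m (pd n \<delta> j)"
proof (induction j)
  case 0 then show ?case by simp
next
  case (Suc j)
  have "Gamma S (n * n ^ Suc j) m (\<lambda>I a. \<delta> (I div n ^ Suc j) a * n ^ Suc j + pd n \<delta> j (I mod n ^ Suc j) a)"
    by (rule T2[OF Suc.prems(1) Suc.IH[OF Suc.prems] Suc.prems(2) pd_rng[OF Suc.prems(2,3)] Suc.prems(3) _ Suc.prems(4)]) (use Suc.prems in simp)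
  then show ?case by (simp only: pd.simps power_Suc[of n "Suc j"])
qed

lemma G_lvl: "Gamma S N m P \<Longrightarrow> rng N m P \<Longrightarrow> 0 < N \<Longrightarrow> 0 < m \<Longrightarrow>
  Gamma S N (cnt m L) (\<lambda>I j. foldl P I (wd m L j)) \<and> rng N (cnt m L) (\<lambda>I j. foldl P I (wd m L j))"
proof (induction L)
  case 0
  have "Gamma S N (cnt m 0) (\<lambda>I j. foldl P I (wd m 0 j)) = Gamma S N m P" unfolding cnt.simps by (rule Gamma_cong) simp
  then show ?case using 0 by (simp add: rng_def)
next
  case (Suc L)
  define c where "c = cnt m L"
  define WL where "WL = (\<lambda>I j. foldl P I (wd m L j))"
  have GL: "Gamma S N c WL" and RL: "rng N c WL" using Suc by (simp_all add: c_def WL_def)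
  have mc: "m \<le> c" using cnt_ge by (simp add: c_def)
  have c0: "0 < c" using mc Suc.prems by simp
  define \<delta>in where "\<delta>in = (\<lambda>I j. if j < m then P I j else WL I (j - m))"
  have Rin: "rng N (m + c) \<delta>in" using Suc.prems(2) RL by (auto simp: rng_def \<delta>in_def)
  have G1: "Gamma S N (m + c) \<delta>in"
  proof (rule T1[OF GL Suc.prems(3) _ _ RL])
    show "0 < m + c" using c0 by simp
    show "\<forall>j<m + c. (if j < m then j else j - m) < c" using mc by auto
    show "\<forall>i<N. \<forall>j<m + c. \<delta>in i j = WL i (if j < m then j else j - m)"
      by (auto simp: \<delta>in_def WL_def wd_small)
  qed
  note G2 = T3[OF G1 Rin Suc.prems(3) Suc.prems(4) c0]
  have eq: "\<And>I j. I < N \<Longrightarrow> j < m + m * c \<Longrightarrow>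
     (if j < m then \<delta>in I j else \<delta>in (\<delta>in I ((j - m) div c)) (m + (j - m) mod c)) = foldl P I (wd m (Suc L) j)"
  proof -
    fix I j assume I: "I < N" and j: "j < m + m * c"
    show "(if j < m then \<delta>in I j else \<delta>in (\<delta>in I ((j - m) div c)) (m + (j - m) mod c)) = foldl P I (wd m (Suc L) j)"
    proof (cases "j < m")
      case False
      have "j - m < m * c" using j False by simp
      then have "(j - m) div c < m" using c0 by (simp add: div_less_iff_less_mult)
      moreover have "(j - m) mod c < c" using c0 by simp
      ultimately show ?thesis using False by (simp add: \<delta>in_def WL_def c_def)
    qed (simp add: \<delta>in_def)
  qed
  have "Gamma S N (cnt m (Suc L)) (\<lambda>I j. foldl P I (wd m (Suc L) j))"
    using G2 Gamma_cong[of N "m + m * c", OF eq] by (simp add: c_def)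
  moreover have "rng N (cnt m (Suc L)) (\<lambda>I j. foldl P I (wd m (Suc L) j))"
    unfolding rng_def
  proof (intro allI impI)
    fix i j assume "i < N" "j < cnt m (Suc L)"
    then show "foldl P i (wd m (Suc L) j) < N"
      using foldl_rng[OF Suc.prems(2)] wd_set[OF Suc.prems(4)] by blast
  qed
  ultimately show ?case ..
qed

end

lemma word_trans_lt: "automaton n m \<delta> \<Longrightarrow> set w \<subseteq> {0..<m} \<Longrightarrow> q < n \<Longrightarrow> word_trans n \<delta> w q < n"
  using foldl_rng[of n m \<delta> q w] by (auto simp: word_trans_def automaton_def rng_def atLeast0LessThan)

lemma word_trans_comp: "automaton n m \<delta> \<Longrightarrow> set w1 \<subseteq> {0..<m} \<Longrightarrow>
   word_trans n \<delta> w2 \<circ> word_trans n \<delta> w1 = word_trans n \<delta> (w1 @ w2)"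
proof
  fix q assume a: "automaton n m \<delta>" "set w1 \<subseteq> {0..<m}"
  show "(word_trans n \<delta> w2 \<circ> word_trans n \<delta> w1) q = word_trans n \<delta> (w1 @ w2) q"
  proof (cases "q < n")
    case True
    have "foldl \<delta> q w1 < n" using word_trans_lt[OF a True] True by (simp add: word_trans_def)
    then show ?thesis using True by (simp add: word_trans_def)
  qed (simp add: word_trans_def)
qed

theorem proposition4p2:
  fixes S :: "('o, 'm) cart_dag"
    and n m :: nat and \<delta> :: "nat \<Rightarrow> nat \<Rightarrow> nat"
    and k :: nat and e :: "nat \<Rightarrow> (nat \<Rightarrow> nat)"
  assumes "conway_category S"
    and "automaton n m \<delta>"
    and "Gamma S n m \<delta>"
    and "bij_betw e {0..<k} (trans_monoid n m \<delta>)"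
  shows "Gamma S k k (\<lambda>i j. the_inv_into {0..<k} e (tm_mult (e i) (e j)))"
proof -
  interpret conway S by (rule conway.intro) fact
  have aut: "automaton n m \<delta>" by fact
  have n0: "0 < n" and m0: "0 < m" and R: "rng n m \<delta>" using assms(2) by (auto simp: automaton_def rng_def)
  have bij: "bij_betw e {0..<k} (trans_monoid n m \<delta>)" by fact
  have injE: "inj_on e {0..<k}" and imE: "e ` {0..<k} = trans_monoid n m \<delta>" using bij by (auto simp: bij_betw_def)
  define J where "J = n - 1"
  have nJ: "n = Suc J" using n0 by (simp add: J_def)
  define N where "N = n ^ Suc J"
  define P where "P = pd n \<delta> J"
  have N0: "0 < N" using n0 by (simp add: N_def)
  have GP: "Gamma S N m P" unfolding N_def P_def by (rule G_pow[OF assms(3) R n0 m0])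
  have RP: "rng N m P" unfolding N_def P_def by (rule pd_rng[OF R n0])
  have ex: "\<forall>t<k. \<exists>w. set w \<subseteq> {0..<m} \<and> e t = word_trans n \<delta> w"
  proof (intro allI impI)
    fix t assume "t < k"
    then have "e t \<in> trans_monoid n m \<delta>" using imE by auto
    then show "\<exists>w. set w \<subseteq> {0..<m} \<and> e t = word_trans n \<delta> w" by (auto simp: trans_monoid_def)
  qed
  define ws where "ws t = (SOME w. set w \<subseteq> {0..<m} \<and> e t = word_trans n \<delta> w)" for t
  have ws: "\<And>t. t < k \<Longrightarrow> set (ws t) \<subseteq> {0..<m} \<and> e t = word_trans n \<delta> (ws t)"
  proof -
    fix t assume t: "t < k"
    show "set (ws t) \<subseteq> {0..<m} \<and> e t = word_trans n \<delta> (ws t)"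
      unfolding ws_def by (rule someI_ex) (use ex t in blast)
  qed
  have ws': "\<And>t. t < k \<Longrightarrow> set (ws t) \<subseteq> {..<m}" using ws by (simp add: atLeast0LessThan)
  define L where "L = Max ((\<lambda>t. length (ws t)) ` {..<k})"
  have wsL: "\<And>t. t < k \<Longrightarrow> length (ws t) \<le> Suc L"
    unfolding L_def by (metis Max_ge finite_imageI finite_lessThan imageI lessThan_iff le_SucI)
  have k0: "0 < k"
  proof -
    have "word_trans n \<delta> [] \<in> trans_monoid n m \<delta>" by (auto simp: trans_monoid_def)
    then have "word_trans n \<delta> [] \<in> e ` {0..<k}" using imE by simp
    then show ?thesis by auto
  qed
  define WL where "WL = (\<lambda>I j. foldl P I (wd m L j))"
  have GL: "Gamma S N (cnt m L) WL" and RL: "rng N (cnt m L) WL"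
    using G_lvl[OF GP RP N0 m0, of L] by (simp_all add: WL_def)
  have cL0: "0 < cnt m L" using cnt_ge[of m L] m0 by simp
  have G5: "Gamma S N (Suc (cnt m L)) (\<lambda>I j. if j = 0 then I else WL I (j - 1))"
    by (rule T5[OF GL RL N0 cL0])
  have R5: "rng N (Suc (cnt m L)) (\<lambda>I j. if j = 0 then I else WL I (j - 1))"
    using RL by (auto simp: rng_def)
  define lm where "lm t = (if ws t = [] then 0 else Suc (SOME j. j < cnt m L \<and> wd m L j = ws t))" for t
  have lm: "\<And>t. t < k \<Longrightarrow> lm t < Suc (cnt m L) \<and> (\<forall>I. (if lm t = 0 then I else WL I (lm t - 1)) = foldl P I (ws t))"
  proof -
    fix t assume t: "t < k"
    show "lm t < Suc (cnt m L) \<and> (\<forall>I. (if lm t = 0 then I else WL I (lm t - 1)) = foldl P I (ws t))"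
    proof (cases "ws t = []")
      case True then show ?thesis by (simp add: lm_def)
    next
      case False
      have "\<exists>j<cnt m L. wd m L j = ws t" using wd_surj[OF False ws'[OF t] wsL[OF t]] .
      then have s: "(SOME j. j < cnt m L \<and> wd m L j = ws t) < cnt m L \<and> wd m L (SOME j. j < cnt m L \<and> wd m L j = ws t) = ws t"
        by (metis (mono_tags, lifting) someI_ex)
      then show ?thesis using False by (simp add: lm_def WL_def)
    qed
  qed
  define \<tau> where "\<tau> = (\<lambda>I t. foldl P I (ws t))"
  have G1: "Gamma S N k \<tau>"
  proof (rule T1[OF G5 N0 k0 _ R5])
    show "\<forall>j<k. lm j < Suc (cnt m L)" using lm by blast
    show "\<forall>i<N. \<forall>j<k. \<tau> i j = (if lm j = 0 then i else WL i (lm j - 1))" using lm by (simp add: \<tau>_def)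
  qed
  have R1: "rng N k \<tau>" using foldl_rng[OF RP] ws' by (auto simp: rng_def \<tau>_def)
  define \<alpha> where "\<alpha> s = enc n (map (e s) [0..<n])" for s
  have es_lt: "\<And>s q. s < k \<Longrightarrow> q < n \<Longrightarrow> e s q < n"
  proof -
    fix s q assume s: "s < k" and q: "q < n"
    show "e s q < n" using ws[OF s] word_trans_lt[OF aut _ q, of "ws s"] by simp
  qed
  have es_out: "\<And>s q. s < k \<Longrightarrow> \<not> q < n \<Longrightarrow> e s q = q" using ws by (simp add: word_trans_def)
  have \<alpha>N: "\<forall>s<k. \<alpha> s < N"
  proof (intro allI impI)
    fix s assume s: "s < k"
    have "enc n (map (e s) [0..<n]) < n ^ length (map (e s) [0..<n])" using es_lt[OF s] by (intro enc_lt) auto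
    then show "\<alpha> s < N" by (simp add: \<alpha>_def N_def nJ)
  qed
  have \<alpha>inj: "inj_on \<alpha> {..<k}"
  proof (rule inj_onI)
    fix s s' assume s: "s \<in> {..<k}" and s': "s' \<in> {..<k}" and eq: "\<alpha> s = \<alpha> s'"
    have "map (e s) [0..<n] = map (e s') [0..<n]"
      using enc_inj[of "map (e s) [0..<n]" "map (e s') [0..<n]" n] eq es_lt s s' by (auto simp: \<alpha>_def)
    then have "\<forall>q<n. e s q = e s' q" by (simp add: map_eq_conv)
    then have "e s = e s'" using es_out s s' by (intro ext) (case_tac "x < n", auto)
    then show "s = s'" using injE s s' by (auto simp: inj_on_def)
  qed
  have kN: "k \<le> N"
  proof -
    have "card {..<k} \<le> card {..<N}" by (rule card_inj_on_le[OF \<alpha>inj]) (use \<alpha>N in auto)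
    then show ?thesis by simp
  qed
  define \<delta>M where "\<delta>M = (\<lambda>i j. the_inv_into {0..<k} e (tm_mult (e i) (e j)))"
  have mem: "\<And>s t. s < k \<Longrightarrow> t < k \<Longrightarrow> tm_mult (e s) (e t) \<in> e ` {0..<k}"
  proof -
    fix s t assume s: "s < k" and t: "t < k"
    have "tm_mult (e s) (e t) = word_trans n \<delta> (ws s @ ws t)"
      using ws[OF s] ws[OF t] word_trans_comp[OF aut] by (simp add: tm_mult_def)
    moreover have "set (ws s @ ws t) \<subseteq> {0..<m}" using ws s t by auto
    ultimately have "tm_mult (e s) (e t) \<in> trans_monoid n m \<delta>" unfolding trans_monoid_def by blast
    then show "tm_mult (e s) (e t) \<in> e ` {0..<k}" using imE by simp
  qed
  have eM: "\<And>s t. s < k \<Longrightarrow> t < k \<Longrightarrow> e (\<delta>M s t) = e t \<circ> e s"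
    unfolding \<delta>M_def using f_the_inv_into_f[OF injE] mem by (simp add: tm_mult_def)
  have RM: "rng k k \<delta>M"
    unfolding rng_def \<delta>M_def
  proof (intro allI impI)
    fix i j assume "i < k" "j < k"
    then have "the_inv_into {0..<k} e (tm_mult (e i) (e j)) \<in> {0..<k}"
      using the_inv_into_into[OF injE mem] by blast
    then show "the_inv_into {0..<k} e (tm_mult (e i) (e j)) < k" by simp
  qed
  have cl: "\<forall>s<k. \<forall>t<k. \<tau> (\<alpha> s) t = \<alpha> (\<delta>M s t)"
  proof (intro allI impI)
    fix s t assume s: "s < k" and t: "t < k"
    have "\<tau> (\<alpha> s) t = enc n (map (\<lambda>q. foldl \<delta> q (ws t)) (map (e s) [0..<n]))"
      unfolding \<tau>_def \<alpha>_def P_def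
      by (rule foldl_enc) (use es_lt[OF s] ws'[OF t] R nJ in auto)
    also have "\<dots> = enc n (map (e (\<delta>M s t)) [0..<n])"
    proof -
      have "\<And>q. q < n \<Longrightarrow> foldl \<delta> (e s q) (ws t) = e (\<delta>M s t) q"
        using eM[OF s t] ws[OF t] es_lt[OF s] by (simp add: word_trans_def)
      then have "map ((\<lambda>q. foldl \<delta> q (ws t)) \<circ> e s) [0..<n] = map (e (\<delta>M s t)) [0..<n]"
        by (intro map_cong) auto
      then show ?thesis by (simp only: map_map)
    qed
    finally show "\<tau> (\<alpha> s) t = \<alpha> (\<delta>M s t)" by (simp add: \<alpha>_def)
  qed
  have "Gamma S k k \<delta>M" by (rule T4[OF G1 R1 k0 kN k0 \<alpha>inj \<alpha>N cl RM])
  then show ?thesis by (simp add: \<delta>M_def)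
qed

end
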